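(* Let $f(X)=\sum_{a=(h_1,\dots,h_N)\in\mathcal{A}} w_a\sum_{\biguplus_{i=1}^N X_i=X}\prod_{i=1}^N f_{h_i}(X_i)$ be a multi-Bernoulli mixture, let $p\ge1$, $c>0$, and let $d$ be a distance on $\mathcal{X}$ with $d_c(x,y)=\min\{c,d(x,y)\}$. Consider the problem of finding an estimate $\hat X=\bigcup_{j=1}^N\hat X_j$, where each $\hat X_j$ is either $\emptyset$ or a singleton $\{\hat x_j\}$, that solves $$\operatorname*{argmin}_{\hat X}\int \bar d(X,\hat X)^p f(X)\,\delta X,$$ where for $X=\{x_1,\dots,x_n\}$, $Y=\{y_1,\dots,y_m\}$ with $n\ge m$, $\bar d(X,Y)=\big[\min_{\pi\in\Pi_n}\sum_{j=1}^m d_c(x_{\pi(j)},y_j)^p+c^p(n-m)\big]^{1/p}$, and $\bar d(X,Y)=\bar d(Y,X)$ if $n<m$. Then the solution of this problem is the same as the solution of $$\operatorname*{argmin}_{[\hat X_j]}\sum_{a\in\mathcal{A}}w_a\int\cdots\int\prod_{i=1}^N f_{h_i}(X_i)\; \bar d\big([X_i],[\hat X_j]\big)^p\,\delta X_1\cdots\delta X_N,$$ where the optimisation is over Bernoulli sets $\hat X_1,\dots,\hat X_N$ (each empty or a singleton) and $\bar d([X_i],[\hat X_j])=\min_{\pi\in\Pi_N}\big[\sum_{i=1}^N\bar d(X_i,\hat X_{\pi(i)})^p\big]^{1/p}$, with, for sets of at most one element, $\bar d(\emptyset,\emptyset)=0$, $\bar d(X_i,\hat X_j)=c$ if exactly one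 of $X_i,\hat X_j$ is empty, and $\bar d(\{x_i\},\{\hat x_j\})=d_c(x_i,\hat x_j)$.
   Context: Single-target states lie in $\mathcal{X}\subseteq\mathbb{R}^d$. The set integral is $\int v(X)\,\delta X = v(\emptyset)+\sum_{n=1}^\infty\frac{1}{n!}\int\cdots\int v(\{x_1,\dots,x_n\})\,\mathrm{d}x_1\cdots\mathrm{d}x_n$. A Bernoulli density with existence probability $r$ and state density $p(x)$ is $b(\emptyset)=1-r$, $b(\{x\})=r\,p(x)$, $b(X)=0$ for $|X|>1$. $\mathcal{H}$ is an index set of single-target hypotheses, each $f_h$ ($h\in\mathcal{H}$) a Bernoulli density; $\mathcal{A}\subseteq\mathcal{H}^N$ is a finite set of global hypotheses $a=(h_1,\dots,h_N)$ with weights $w_a\ge0$, $\sum_a w_a=1$. $\sum_{\biguplus_{i=1}^N X_i=X}$ sums over ordered tuples of disjoint subsets with union $X$. $\Pi_k$ is the set of permutations of $\{1,\dots,k\}$. *)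

theory Defs
  imports "HOL-Analysis.Analysis"
begin

definition dcut :: "real \<Rightarrow> ('a \<Rightarrow> 'a \<Rightarrow> real) \<Rightarrow> 'a \<Rightarrow> 'a \<Rightarrow> real" where
  "dcut c d x y = min c (d x y)"

definition enum_set :: "'a set \<Rightarrow> 'a list" where
  "enum_set X = (SOME xs. set xs = X \<and> distinct xs)"

text \<open>The metric d-bar(X,Y) for n = |X| >= m = |Y| (0-indexed permutations of {0..n-1}).\<close>
definition ospa_ge :: "real \<Rightarrow> real \<Rightarrow> ('a \<Rightarrow> 'a \<Rightarrow> real) \<Rightarrow> 'a set \<Rightarrow> 'a set \<Rightarrow> real" where
  "ospa_ge p c d X Y =
     (let xs = enum_set X; ys = enum_set Y; n = length xs; m = length ys in
      (Min {(\<Sum>j<m. dcut c d (xs ! (\<pi> j)) (ys ! j) powr p) + c powr p * real (n - m)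
              | \<pi>. \<pi> permutes {..<n}}) powr (1 / p))"

definition dbar :: "real \<Rightarrow> real \<Rightarrow> ('a \<Rightarrow> 'a \<Rightarrow> real) \<Rightarrow> 'a set \<Rightarrow> 'a set \<Rightarrow> real" where
  "dbar p c d X Y = (if card Y \<le> card X then ospa_ge p c d X Y else ospa_ge p c d Y X)"

definition dbarB :: "real \<Rightarrow> ('a \<Rightarrow> 'a \<Rightarrow> real) \<Rightarrow> 'a set \<Rightarrow> 'a set \<Rightarrow> real" where
  "dbarB c d X Y =
     (if X = {} \<and> Y = {} then 0
      else if X = {} \<or> Y = {} then c
      else dcut c d (the_elem X) (the_elem Y))"

definition dbar_tuple :: "real \<Rightarrow> real \<Rightarrow> ('a \<Rightarrow> 'a \<Rightarrow> real) \<Rightarrow> nat \<Rightarrow>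
    (nat \<Rightarrow> 'a set) \<Rightarrow> (nat \<Rightarrow> 'a set) \<Rightarrow> real" where
  "dbar_tuple p c d N Xs Ys =
     Min {(\<Sum>i<N. dbarB c d (Xs i) (Ys (\<pi> i)) powr p) powr (1 / p) | \<pi>. \<pi> permutes {..<N}}"

definition bern :: "real \<Rightarrow> ('a \<Rightarrow> real) \<Rightarrow> 'a set \<Rightarrow> real" where
  "bern r q X = (if X = {} then 1 - r else if card X = 1 then r * q (the_elem X) else 0)"

definition oparts :: "nat \<Rightarrow> 'a set \<Rightarrow> (nat \<Rightarrow> 'a set) set" where
  "oparts N X = {Xs. Xs \<in> {..<N} \<rightarrow>\<^sub>E Pow X \<and> disjoint_family_on Xs {..<N} \<and> (\<Union>i<N. Xs i) = X}"

text \<open>Multi-Bernoulli mixture density; global hypotheses are lists of length N.\<close>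
definition mbm :: "nat \<Rightarrow> 'h list set \<Rightarrow> ('h list \<Rightarrow> real) \<Rightarrow> ('h \<Rightarrow> real) \<Rightarrow> ('h \<Rightarrow> 'a \<Rightarrow> real)
    \<Rightarrow> 'a set \<Rightarrow> real" where
  "mbm N A w r q X = (\<Sum>a\<in>A. w a * (\<Sum>Xs\<in>oparts N X. \<Prod>i<N. bern (r (a ! i)) (q (a ! i)) (Xs i)))"

definition set_int :: "('a::euclidean_space set \<Rightarrow> ennreal) \<Rightarrow> ennreal" where
  "set_int v = v {} + (\<Sum>n. ennreal (1 / fact (Suc n)) *
       (\<integral>\<^sup>+ x. v (x ` {..<Suc n}) \<partial>(PiM {..<Suc n} (\<lambda>_. lborel))))"

fun msi :: "nat \<Rightarrow> ((nat \<Rightarrow> 'a::euclidean_space set) \<Rightarrow> ennreal) \<Rightarrow> ennreal" where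
  "msi 0 g = g (\<lambda>_. {})"
| "msi (Suc k) g = set_int (\<lambda>X. msi k (\<lambda>Xs. g (Xs(k := X))))"

definition obj1 :: "real \<Rightarrow> real \<Rightarrow> ('a::euclidean_space \<Rightarrow> 'a \<Rightarrow> real) \<Rightarrow> nat \<Rightarrow> 'h list set \<Rightarrow>
    ('h list \<Rightarrow> real) \<Rightarrow> ('h \<Rightarrow> real) \<Rightarrow> ('h \<Rightarrow> 'a \<Rightarrow> real) \<Rightarrow> 'a set \<Rightarrow> ennreal" where
  "obj1 p c d N A w r q Xh = set_int (\<lambda>X. ennreal (dbar p c d X Xh powr p * mbm N A w r q X))"

definition obj2 :: "real \<Rightarrow> real \<Rightarrow> ('a::euclidean_space \<Rightarrow> 'a \<Rightarrow> real) \<Rightarrow> nat \<Rightarrow> 'h list set \<Rightarrow>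
    ('h list \<Rightarrow> real) \<Rightarrow> ('h \<Rightarrow> real) \<Rightarrow> ('h \<Rightarrow> 'a \<Rightarrow> real) \<Rightarrow> (nat \<Rightarrow> 'a set) \<Rightarrow> ennreal" where
  "obj2 p c d N A w r q Xh = (\<Sum>a\<in>A. ennreal (w a) *
      msi N (\<lambda>Xs. ennreal ((\<Prod>i<N. bern (r (a ! i)) (q (a ! i)) (Xs i)) *
                            dbar_tuple p c d N Xs Xh powr p)))"

definition bern_est :: "'a set \<Rightarrow> nat \<Rightarrow> (nat \<Rightarrow> 'a set) \<Rightarrow> bool" where
  "bern_est S N Xh = ((\<forall>j<N. Xh j = {} \<or> (\<exists>x\<in>S. Xh j = {x})) \<and> disjoint_family_on Xh {..<N})"

end

theory Submission
  imports Defs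
begin


lemma psf: "product_sigma_finite (\<lambda>_::'i. lborel::'a::euclidean_space measure)"
  by (simp add: product_sigma_finite_def lborel.sigma_finite_measure_axioms)

lemma PiM_lb_sigma_finite:
  "finite (I::nat set) \<Longrightarrow> sigma_finite_measure (PiM I (\<lambda>_. lborel::'a::euclidean_space measure))"
proof -
  assume "finite I"
  then interpret finite_product_sigma_finite "\<lambda>_. lborel::'a measure" I
    using psf by (simp add: finite_product_sigma_finite_def finite_product_sigma_finite_axioms_def)
  show ?thesis by (rule sigma_finite_measure_axioms)
qed

lemma diag_null:
  fixes I :: "nat set"
  assumes I: "finite I" "i \<in> I" "j \<in> I" "i \<noteq> j"
  shows "AE x in PiM I (\<lambda>_. lborel::'a::euclidean_space measure). x i \<noteq> x j"
proof -
  let ?M = "PiM I (\<lambda>_. lborel::'a measure)"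
  define D where "D = {x \<in> space ?M. x i = x j}"
  have "D = (\<lambda>x. x i - x j) -` {0} \<inter> space ?M" unfolding D_def by auto
  also have "\<dots> \<in> sets ?M" proof (rule measurable_sets[where A=borel])
    have [measurable]: "i \<in> I" "j \<in> I" using I by auto
    show "(\<lambda>x. x i - x j) \<in> borel_measurable ?M" by measurable
  qed auto
  finally have Dm: "D \<in> sets ?M" .
  have II: "I = insert i (I - {i})" using I by auto
  have "emeasure ?M D = (\<integral>\<^sup>+x. indicator D x \<partial>?M)" using Dm by simp
  also have "\<dots> = (\<integral>\<^sup>+x. (\<integral>\<^sup>+y. indicator D (x(i:=y)) \<partial>lborel) \<partial>PiM (I-{i}) (\<lambda>_. lborel))"
    apply (subst II)
    apply (rule product_sigma_finite.product_nn_integral_insert[OF psf])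
    using I Dm II by (auto)
  also have "\<dots> = (\<integral>\<^sup>+x. 0 \<partial>PiM (I-{i}) (\<lambda>_. lborel))"
  proof -
    have "(\<integral>\<^sup>+y. indicator D (x(i:=y)) \<partial>lborel) = 0" for x
    proof -
      have "(\<integral>\<^sup>+y. indicator D (x(i:=y)) \<partial>lborel) \<le> (\<integral>\<^sup>+y. indicator {x j} y \<partial>(lborel::'a measure))"
        apply (rule nn_integral_mono)
        using I unfolding D_def by (auto simp: indicator_def)
      then show ?thesis by simp
    qed
    then show ?thesis by simp
  qed
  finally have "emeasure ?M D = 0" by simp
  then show ?thesis
    by (intro AE_I[OF _ _ Dm]) (auto simp: D_def)
qed

lemma AE_inj:
  "AE x in PiM {..<n::nat} (\<lambda>_. lborel::'a::euclidean_space measure). inj_on x {..<n}"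
proof -
  have "AE x in PiM {..<n::nat} (\<lambda>_. lborel::'a measure). \<forall>ij\<in>{ij. fst ij < n \<and> snd ij < n \<and> fst ij \<noteq> snd ij}. x (fst ij) \<noteq> x (snd ij)"
    proof (subst AE_ball_countable)
    show "countable {ij::nat\<times>nat. fst ij < n \<and> snd ij < n \<and> fst ij \<noteq> snd ij}"
      by (rule countable_finite, rule finite_subset[of _ "{..<n} \<times> {..<n}"]) auto
  qed (auto intro!: diag_null)
  then show ?thesis
    by (rule AE_mp) (auto intro!: AE_I2 simp: inj_on_def)
qed

lemma set_int_bern:
  fixes v :: "'a::euclidean_space set \<Rightarrow> ennreal"
  assumes z: "\<And>X. finite X \<Longrightarrow> 2 \<le> card X \<Longrightarrow> v X = 0"
    and m: "(\<lambda>x. v {x}) \<in> borel_measurable lborel"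
  shows "set_int v = v {} + (\<integral>\<^sup>+x. v {x} \<partial>lborel)"
proof -
  have t0: "(\<integral>\<^sup>+ x. v (x ` {..<Suc 0}) \<partial>(PiM {..<Suc 0} (\<lambda>_. lborel))) = (\<integral>\<^sup>+x. v {x} \<partial>lborel)"
  proof -
    have "(\<integral>\<^sup>+ x. v (x ` {..<Suc 0}) \<partial>(PiM {..<Suc 0} (\<lambda>_. lborel))) = (\<integral>\<^sup>+ x. v {x 0} \<partial>(PiM {0::nat} (\<lambda>_. lborel)))"
      by (simp add: lessThan_Suc)
    also have "\<dots> = (\<integral>\<^sup>+x. v {x} \<partial>lborel)"
      using product_sigma_finite.product_nn_integral_singleton[OF psf m, of 0] by simp
    finally show ?thesis .
  qed
  have tn: "(\<integral>\<^sup>+ x. v (x ` {..<Suc n}) \<partial>(PiM {..<Suc n} (\<lambda>_. lborel))) = 0" if "n \<noteq> 0" for n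
  proof -
    have "AE x in PiM {..<Suc n} (\<lambda>_. lborel::'a measure). x 0 \<noteq> x 1"
      by (rule diag_null) (use that in auto)
    then have "AE x in PiM {..<Suc n} (\<lambda>_. lborel::'a measure). v (x ` {..<Suc n}) = 0"
    proof (rule AE_mp, intro AE_I2 impI)
      fix x :: "nat \<Rightarrow> 'a" assume "x 0 \<noteq> x 1"
      moreover have "{x 0, x 1} \<subseteq> x ` {..<Suc n}" using that by auto
      ultimately have "2 \<le> card (x ` {..<Suc n})"
        by (metis card_2_iff card_mono finite_imageI finite_lessThan)
      then show "v (x ` {..<Suc n}) = 0" by (intro z) auto
    qed
    then have "(\<integral>\<^sup>+ x. v (x ` {..<Suc n}) \<partial>(PiM {..<Suc n} (\<lambda>_. lborel))) = (\<integral>\<^sup>+ x. 0 \<partial>(PiM {..<Suc n} (\<lambda>_. lborel::'a measure)))"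
      by (rule nn_integral_cong_AE)
    then show ?thesis by simp
  qed
  have "(\<Sum>n. ennreal (1 / fact (Suc n)) * (\<integral>\<^sup>+ x. v (x ` {..<Suc n}) \<partial>(PiM {..<Suc n} (\<lambda>_. lborel))))
     = (\<Sum>n\<in>{0}. ennreal (1 / fact (Suc n)) * (\<integral>\<^sup>+ x. v (x ` {..<Suc n}) \<partial>(PiM {..<Suc n} (\<lambda>_. lborel))))"
    by (rule suminf_finite) (auto simp: tn)
  then show ?thesis unfolding set_int_def by (simp add: t0)
qed

lemma PiM_lb_reindex:
  assumes f: "bij_betw f I K" and K: "finite K"
  shows "distr (PiM K (\<lambda>_. lborel)) (PiM I (\<lambda>_. lborel)) (\<lambda>\<omega>. \<lambda>n\<in>I. \<omega> (f n)) = PiM I (\<lambda>_. lborel::'a::euclidean_space measure)"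
proof -
  have I: "finite I" using f K bij_betw_finite by blast
  have fm: "(\<lambda>\<omega>. \<lambda>n\<in>I. \<omega> (f n)) \<in> measurable (PiM K (\<lambda>_. lborel)) (PiM I (\<lambda>_. lborel::'a measure))"
    apply (rule measurable_restrict)
    apply (rule measurable_component_singleton)
    using f by (auto simp: bij_betw_def)
  define g where "g = the_inv_into I f"
  have g: "bij_betw g K I" unfolding g_def using f by (rule bij_betw_the_inv_into)
  have fg: "k \<in> K \<Longrightarrow> f (g k) = k" for k unfolding g_def using f
    by (simp add: f_the_inv_into_f_bij_betw)
  have gf: "i \<in> I \<Longrightarrow> g (f i) = i" for i unfolding g_def using f
    by (meson bij_betw_imp_inj_on the_inv_into_f_f)
  show ?thesis
  proof (rule product_sigma_finite.PiM_eqI[OF psf I])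
    show "sets (distr (PiM K (\<lambda>_. lborel)) (PiM I (\<lambda>_. lborel)) (\<lambda>\<omega>. \<lambda>n\<in>I. \<omega> (f n))) = sets (PiM I (\<lambda>_. lborel::'a measure))"
      by simp
    fix A assume A: "\<And>i. i \<in> I \<Longrightarrow> A i \<in> sets (lborel::'a measure)"
    have pre: "(\<lambda>\<omega>. \<lambda>n\<in>I. \<omega> (f n)) -` Pi\<^sub>E I A \<inter> space (PiM K (\<lambda>_. lborel)) = Pi\<^sub>E K (\<lambda>k. A (g k))"
    proof (intro set_eqI iffI)
      fix \<omega> assume w: "\<omega> \<in> (\<lambda>\<omega>. \<lambda>n\<in>I. \<omega> (f n)) -` Pi\<^sub>E I A \<inter> space (PiM K (\<lambda>_. lborel::'a measure))"
      have e: "\<omega> \<in> extensional K" using w by (simp add: space_PiM PiE_def)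
      have "\<omega> k \<in> A (g k)" if k: "k \<in> K" for k
      proof -
        have gk: "g k \<in> I" using g k by (auto simp: bij_betw_def)
        have "(\<lambda>n\<in>I. \<omega> (f n)) (g k) \<in> A (g k)" using w gk by (auto simp: PiE_def Pi_def)
        then show ?thesis using gk fg[OF k] by simp
      qed
      then show "\<omega> \<in> Pi\<^sub>E K (\<lambda>k. A (g k))" using e by (simp add: PiE_def Pi_def)
    next
      fix \<omega> assume w: "\<omega> \<in> Pi\<^sub>E K (\<lambda>k. A (g k))"
      have "\<omega> \<in> space (PiM K (\<lambda>_. lborel::'a measure))" using w by (simp add: space_PiM PiE_def Pi_def)
      moreover have "(\<lambda>n\<in>I. \<omega> (f n)) \<in> Pi\<^sub>E I A"
      proof -
        have "\<omega> (f i) \<in> A i" if i: "i \<in> I" for i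
        proof -
          have "f i \<in> K" using f i by (auto simp: bij_betw_def)
          then have "\<omega> (f i) \<in> A (g (f i))" using w by (auto simp: PiE_def Pi_def)
          then show ?thesis using gf[OF i] by simp
        qed
        then show ?thesis by (simp add: PiE_def Pi_def)
      qed
      ultimately show "\<omega> \<in> (\<lambda>\<omega>. \<lambda>n\<in>I. \<omega> (f n)) -` Pi\<^sub>E I A \<inter> space (PiM K (\<lambda>_. lborel::'a measure))"
        by simp
    qed
    have "emeasure (distr (PiM K (\<lambda>_. lborel)) (PiM I (\<lambda>_. lborel)) (\<lambda>\<omega>. \<lambda>n\<in>I. \<omega> (f n))) (Pi\<^sub>E I A)
        = emeasure (PiM K (\<lambda>_. lborel)) (Pi\<^sub>E K (\<lambda>k. A (g k)))"
    proof -
      have "Pi\<^sub>E I A \<in> sets (PiM I (\<lambda>_. lborel::'a measure))" using A by (intro sets_PiM_I_finite I) auto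
      then show ?thesis by (simp add: emeasure_distr[OF fm] pre)
    qed
    also have "\<dots> = (\<Prod>k\<in>K. emeasure lborel (A (g k)))"
      using A g K by (intro product_sigma_finite.emeasure_PiM[OF psf]) (auto simp: bij_betw_def)
    also have "\<dots> = (\<Prod>i\<in>I. emeasure lborel (A i))"
      using prod.reindex_bij_betw[OF g, of "\<lambda>i. emeasure lborel (A i)"] by simp
    finally show "emeasure (distr (PiM K (\<lambda>_. lborel)) (PiM I (\<lambda>_. lborel)) (\<lambda>\<omega>. \<lambda>n\<in>I. \<omega> (f n))) (Pi\<^sub>E I A)
        = (\<Prod>i\<in>I. emeasure lborel (A i))" .
  qed
qed

lemma nn_integral_PiM_lb_reindex:
  assumes f: "bij_betw f I K" and K: "finite K"
    and h: "h \<in> borel_measurable (PiM I (\<lambda>_. lborel::'a::euclidean_space measure))"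
  shows "(\<integral>\<^sup>+y. h y \<partial>PiM I (\<lambda>_. lborel)) = (\<integral>\<^sup>+\<omega>. h (\<lambda>n\<in>I. \<omega> (f n)) \<partial>PiM K (\<lambda>_. lborel))"
proof -
  have fm: "(\<lambda>\<omega>. \<lambda>n\<in>I. \<omega> (f n)) \<in> measurable (PiM K (\<lambda>_. lborel)) (PiM I (\<lambda>_. lborel::'a measure))"
    apply (rule measurable_restrict)
    apply (rule measurable_component_singleton)
    using f by (auto simp: bij_betw_def)
  have h': "h \<in> borel_measurable (distr (PiM K (\<lambda>_. lborel)) (PiM I (\<lambda>_. lborel::'a measure)) (\<lambda>\<omega>. \<lambda>n\<in>I. \<omega> (f n)))"
    using h by simp
  note A = nn_integral_distr[OF fm h']
  note B = PiM_lb_reindex[OF f K]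
  show ?thesis
    using A unfolding B .
qed


definition Ebern :: "nat set \<Rightarrow> (nat \<Rightarrow> 'a) \<Rightarrow> nat \<Rightarrow> 'a set" where
  "Ebern J y = (\<lambda>i. if i \<in> J then {y i} else {})"

lemma Ebern_upd: "k \<notin> J \<Longrightarrow> (Ebern J y)(k := {x}) = Ebern (insert k J) (y(k:=x))"
  by (auto simp: Ebern_def fun_eq_iff)

lemma Ebern_upd_empty: "k \<notin> J \<Longrightarrow> (Ebern J y)(k := {}) = Ebern J y"
  by (auto simp: Ebern_def fun_eq_iff)

lemma meas_upd:
  assumes k: "k \<notin> J" and m: "(\<lambda>y. g (Ebern (insert k J) y)) \<in> borel_measurable (PiM (insert k J) (\<lambda>_. lborel::'a::euclidean_space measure))"
  shows "(\<lambda>(x,y). g (Ebern (insert k J) (y(k:=x)))) \<in> borel_measurable (lborel \<Otimes>\<^sub>M PiM J (\<lambda>_. lborel::'a measure))"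
proof -
  have "(\<lambda>z. (snd z)(k := fst z)) \<in> measurable (lborel \<Otimes>\<^sub>M PiM J (\<lambda>_. lborel::'a measure)) (PiM (insert k J) (\<lambda>_. lborel))"
    by (rule measurable_fun_upd[where J=J]) auto
  from measurable_comp[OF this m] show ?thesis by (simp add: comp_def case_prod_beta)
qed

lemma msi_formula:
  fixes g :: "(nat \<Rightarrow> 'a::euclidean_space set) \<Rightarrow> ennreal"
  assumes supp: "\<And>Xs i. i < k \<Longrightarrow> finite (Xs i) \<Longrightarrow> 2 \<le> card (Xs i) \<Longrightarrow> g Xs = 0"
    and meas: "\<And>J. J \<subseteq> {..<k} \<Longrightarrow> (\<lambda>y. g (Ebern J y)) \<in> borel_measurable (PiM J (\<lambda>_. lborel))"
  shows "msi k g = (\<Sum>J\<in>Pow {..<k}. \<integral>\<^sup>+y. g (Ebern J y) \<partial>PiM J (\<lambda>_. lborel))"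
  using supp meas
proof (induction k arbitrary: g)
  case 0
  have "Ebern {} y = (\<lambda>_. {})" for y :: "nat \<Rightarrow> 'a" by (simp add: Ebern_def)
  then show ?case by (simp add: PiM_empty nn_integral_count_space_finite)
next
  case (Suc k)
  define v where "v X = msi k (\<lambda>Xs. g (Xs(k := X)))" for X
  have IH: "v X = (\<Sum>J\<in>Pow {..<k}. \<integral>\<^sup>+y. g ((Ebern J y)(k:=X)) \<partial>PiM J (\<lambda>_. lborel))"
    if mX: "\<And>J. J \<subseteq> {..<k} \<Longrightarrow> (\<lambda>y. g ((Ebern J y)(k:=X))) \<in> borel_measurable (PiM J (\<lambda>_. lborel))" for X
    unfolding v_def
  proof (rule Suc.IH)
    fix Xs :: "nat \<Rightarrow> 'a set" and i assume "i < k" "finite (Xs i)" "2 \<le> card (Xs i)"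
    then show "g (Xs(k := X)) = 0" by (intro Suc.prems(1)[of i]) auto
  qed (erule mX)
  have kJ: "J \<subseteq> {..<k} \<Longrightarrow> k \<notin> J" for J by auto
  have v0: "v {} = (\<Sum>J\<in>Pow {..<k}. \<integral>\<^sup>+y. g (Ebern J y) \<partial>PiM J (\<lambda>_. lborel))"
    by (subst IH) (auto simp: Ebern_upd_empty kJ intro!: Suc.prems(2))
  have gx: "(\<lambda>y. g (Ebern (insert k J) y)) \<in> borel_measurable (PiM (insert k J) (\<lambda>_. lborel))" if "J \<subseteq> {..<k}" for J
    using that by (intro Suc.prems(2)) auto
  have v1: "v {x} = (\<Sum>J\<in>Pow {..<k}. \<integral>\<^sup>+y. g (Ebern (insert k J) (y(k:=x))) \<partial>PiM J (\<lambda>_. lborel))" for x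
  proof (subst IH)
    fix J assume J: "J \<subseteq> {..<k}"
    have "(\<lambda>y. (y(k:=x))) \<in> measurable (PiM J (\<lambda>_. lborel::'a measure)) (PiM (insert k J) (\<lambda>_. lborel))"
      by (rule measurable_fun_upd[where J=J]) auto
    from measurable_comp[OF this gx[OF J]]
    show "(\<lambda>y. g ((Ebern J y)(k:={x}))) \<in> borel_measurable (PiM J (\<lambda>_. lborel))"
      using kJ[OF J] by (simp add: comp_def Ebern_upd)
  qed (auto simp: Ebern_upd kJ)
  have vz: "v X = 0" if "finite X" "2 \<le> card X" for X
  proof -
    have z: "g ((Ebern J y)(k:=X)) = 0" for J y
      by (rule Suc.prems(1)[of k]) (use that in auto)
    have "v X = (\<Sum>J\<in>Pow {..<k}. \<integral>\<^sup>+y. 0 \<partial>PiM J (\<lambda>_. lborel::'a measure))"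
      by (subst IH) (simp_all add: z)
    then show ?thesis by simp
  qed
  have innm: "(\<lambda>x. \<integral>\<^sup>+y. g (Ebern (insert k J) (y(k:=x))) \<partial>PiM J (\<lambda>_. lborel)) \<in> borel_measurable lborel"
    if J: "J \<subseteq> {..<k}" for J
  proof -
    have fJ: "finite J" using J finite_subset by blast
    interpret sigma_finite_measure "PiM J (\<lambda>_. lborel::'a measure)" using PiM_lb_sigma_finite[OF fJ] .
    show ?thesis
      by (rule borel_measurable_nn_integral[OF meas_upd[OF kJ[OF J] gx[OF J]]])
  qed
  have vm: "(\<lambda>x. v {x}) \<in> borel_measurable lborel"
    unfolding v1 by (rule borel_measurable_sum) (use innm in auto)
  have "msi (Suc k) g = set_int v" by (simp add: v_def[abs_def])
  also have "\<dots> = v {} + (\<integral>\<^sup>+x. v {x} \<partial>lborel)"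
    by (rule set_int_bern[OF vz vm])
  also have "(\<integral>\<^sup>+x. v {x} \<partial>lborel) = (\<Sum>J\<in>Pow {..<k}. \<integral>\<^sup>+x. (\<integral>\<^sup>+y. g (Ebern (insert k J) (y(k:=x))) \<partial>PiM J (\<lambda>_. lborel)) \<partial>lborel)"
    unfolding v1 by (rule nn_integral_sum) (use innm in auto)
  also have "\<dots> = (\<Sum>J\<in>Pow {..<k}. \<integral>\<^sup>+y. g (Ebern (insert k J) y) \<partial>PiM (insert k J) (\<lambda>_. lborel))"
  proof (rule sum.cong[OF refl])
    fix J assume "J \<in> Pow {..<k}"
    then have J: "J \<subseteq> {..<k}" by auto
    have fJ: "finite J" using J finite_subset by blast
    show "(\<integral>\<^sup>+x. (\<integral>\<^sup>+y. g (Ebern (insert k J) (y(k:=x))) \<partial>PiM J (\<lambda>_. lborel)) \<partial>lborel) =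
      (\<integral>\<^sup>+y. g (Ebern (insert k J) y) \<partial>PiM (insert k J) (\<lambda>_. lborel))"
      by (rule product_sigma_finite.product_nn_integral_insert_rev[OF psf fJ kJ[OF J] gx[OF J], symmetric])
  qed
  also have "\<dots> = (\<Sum>J\<in>insert k ` Pow {..<k}. \<integral>\<^sup>+y. g (Ebern J y) \<partial>PiM J (\<lambda>_. lborel))"
    by (subst sum.reindex) (auto simp: inj_on_def)
  finally show ?case
    unfolding v0 lessThan_Suc Pow_insert
    by (subst sum.union_disjoint) auto
qed


definition OX :: "nat \<Rightarrow> nat \<Rightarrow> (nat \<Rightarrow> 'a) \<Rightarrow> (nat \<Rightarrow> nat) \<Rightarrow> nat \<Rightarrow> 'a set" where
  "OX N n x \<sigma> = (\<lambda>i\<in>{..<N}. x ` {k. k < n \<and> \<sigma> k = i})"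

lemma OX_bij:
  assumes x: "inj_on x {..<n}"
  shows "bij_betw (OX N n x) ({..<n} \<rightarrow>\<^sub>E {..<N}) (oparts N (x ` {..<n}))"
proof (rule bij_betwI')
  fix \<sigma> \<tau> assume s: "\<sigma> \<in> {..<n} \<rightarrow>\<^sub>E {..<N}" and t: "\<tau> \<in> {..<n} \<rightarrow>\<^sub>E {..<N}"
  show "(OX N n x \<sigma> = OX N n x \<tau>) = (\<sigma> = \<tau>)"
  proof
    assume eq: "OX N n x \<sigma> = OX N n x \<tau>"
    show "\<sigma> = \<tau>"
    proof (rule extensionalityI[of _ "{..<n}"])
      show "\<sigma> \<in> extensional {..<n}" "\<tau> \<in> extensional {..<n}" using s t by (auto simp: PiE_def)
      fix k assume k: "k \<in> {..<n}"
      have sk: "\<sigma> k < N" using s k by auto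
      have "x k \<in> OX N n x \<sigma> (\<sigma> k)" using k sk by (auto simp: OX_def)
      then have "x k \<in> OX N n x \<tau> (\<sigma> k)" by (simp add: eq)
      then obtain k' where "k' < n" "\<tau> k' = \<sigma> k" "x k' = x k" using sk by (auto simp: OX_def)
      with x k have "k' = k" by (auto simp: inj_on_def)
      then show "\<sigma> k = \<tau> k" using \<open>\<tau> k' = \<sigma> k\<close> by simp
    qed
  qed simp
next
  fix \<sigma> assume s: "\<sigma> \<in> {..<n} \<rightarrow>\<^sub>E {..<N}"
  show "OX N n x \<sigma> \<in> oparts N (x ` {..<n})"
    unfolding oparts_def
  proof (intro CollectI conjI)
    show "OX N n x \<sigma> \<in> {..<N} \<rightarrow>\<^sub>E Pow (x ` {..<n})" by (auto simp: OX_def)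
    show "disjoint_family_on (OX N n x \<sigma>) {..<N}"
      unfolding disjoint_family_on_def OX_def using x by (auto simp: inj_on_def)
    show "(\<Union>i<N. OX N n x \<sigma> i) = x ` {..<n}"
      using s by (force simp: OX_def)
  qed
next
  fix Xs assume X: "Xs \<in> oparts N (x ` {..<n})"
  then have Xs: "Xs \<in> {..<N} \<rightarrow>\<^sub>E Pow (x ` {..<n})" "disjoint_family_on Xs {..<N}"
    "(\<Union>i<N. Xs i) = x ` {..<n}" by (auto simp: oparts_def)
  define \<sigma> where "\<sigma> = (\<lambda>k\<in>{..<n}. SOME i. i < N \<and> x k \<in> Xs i)"
  have sk: "\<sigma> k < N \<and> x k \<in> Xs (\<sigma> k)" if "k < n" for k
  proof -
    have ex: "\<exists>i. i < N \<and> x k \<in> Xs i" using Xs(3) that by blast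
    from someI_ex[OF ex] show ?thesis unfolding \<sigma>_def using that by simp
  qed
  have s: "\<sigma> \<in> {..<n} \<rightarrow>\<^sub>E {..<N}" using sk by (auto simp: \<sigma>_def)
  have "OX N n x \<sigma> = Xs"
  proof (rule extensionalityI[of _ "{..<N}"])
    show "OX N n x \<sigma> \<in> extensional {..<N}" by (simp add: OX_def)
    show "Xs \<in> extensional {..<N}" using Xs by (auto simp: PiE_def)
    fix i assume i: "i \<in> {..<N}"
    show "OX N n x \<sigma> i = Xs i"
    proof
      show "OX N n x \<sigma> i \<subseteq> Xs i" using i sk by (auto simp: OX_def)
      show "Xs i \<subseteq> OX N n x \<sigma> i"
      proof
        fix y assume y: "y \<in> Xs i"
        then obtain k where k: "k < n" "y = x k" using Xs(1) i by (auto simp: PiE_def Pi_def)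
        have "\<sigma> k = i"
        proof (rule ccontr)
          assume "\<sigma> k \<noteq> i"
          then have "Xs (\<sigma> k) \<inter> Xs i = {}" using Xs(2) sk[OF k(1)] i by (auto simp: disjoint_family_on_def)
          then show False using sk[OF k(1)] y k by auto
        qed
        then show "y \<in> OX N n x \<sigma> i" using i k by (auto simp: OX_def)
      qed
    qed
  qed
  then show "\<exists>\<sigma>\<in>{..<n} \<rightarrow>\<^sub>E {..<N}. Xs = OX N n x \<sigma>" using s by blast
qed

lemma card_inj_image:
  assumes J: "finite J" "card J = n" and that: "J \<subseteq> {..<N}"
  shows "card {\<sigma> \<in> {..<n} \<rightarrow>\<^sub>E {..<N}. inj_on \<sigma> {..<n} \<and> \<sigma> ` {..<n} = J} = fact n"
proof -
  obtain \<beta> where b: "bij_betw \<beta> {..<n} J" using finite_same_card_bij[of "{..<n}" J] J by auto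
  define \<Phi> where "\<Phi> \<rho> = restrict (\<beta> \<circ> \<rho>) {..<n}" for \<rho> :: "nat \<Rightarrow> nat"
  have "bij_betw \<Phi> {\<rho>. \<rho> permutes {..<n}} {\<sigma> \<in> {..<n} \<rightarrow>\<^sub>E {..<N}. inj_on \<sigma> {..<n} \<and> \<sigma> ` {..<n} = J}"
  proof (rule bij_betwI')
    fix \<rho>1 \<rho>2 assume r1: "\<rho>1 \<in> {\<rho>. \<rho> permutes {..<n}}" and r2: "\<rho>2 \<in> {\<rho>. \<rho> permutes {..<n}}"
    show "(\<Phi> \<rho>1 = \<Phi> \<rho>2) = (\<rho>1 = \<rho>2)"
    proof
      assume eq: "\<Phi> \<rho>1 = \<Phi> \<rho>2"
      show "\<rho>1 = \<rho>2"
      proof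
        fix k show "\<rho>1 k = \<rho>2 k"
        proof (cases "k < n")
          case True
          then have "\<beta> (\<rho>1 k) = \<beta> (\<rho>2 k)" using fun_cong[OF eq, of k] by (simp add: \<Phi>_def)
          moreover have "\<rho>1 k < n" "\<rho>2 k < n" using r1 r2 True by (metis mem_Collect_eq lessThan_iff permutes_in_image)+
          ultimately show ?thesis using b by (auto simp: bij_betw_def inj_on_def)
        next
          case False
          then show ?thesis using r1 r2 by (auto simp: permutes_not_in)
        qed
      qed
    qed simp
  next
    fix \<rho> assume r: "\<rho> \<in> {\<rho>. \<rho> permutes {..<n}}"
    then have rb: "bij_betw \<rho> {..<n} {..<n}" by (simp add: permutes_imp_bij)
    have "bij_betw (\<beta> \<circ> \<rho>) {..<n} J" using bij_betw_trans[OF rb b] .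
    then show "\<Phi> \<rho> \<in> {\<sigma> \<in> {..<n} \<rightarrow>\<^sub>E {..<N}. inj_on \<sigma> {..<n} \<and> \<sigma> ` {..<n} = J}"
      using that unfolding \<Phi>_def bij_betw_def by (auto simp: inj_on_def)
  next
    fix \<sigma> assume s: "\<sigma> \<in> {\<sigma> \<in> {..<n} \<rightarrow>\<^sub>E {..<N}. inj_on \<sigma> {..<n} \<and> \<sigma> ` {..<n} = J}"
    then have sb: "bij_betw \<sigma> {..<n} J" by (auto simp: bij_betw_def)
    define \<gamma> where "\<gamma> = the_inv_into {..<n} \<beta>"
    have gb: "bij_betw \<gamma> J {..<n}" unfolding \<gamma>_def by (rule bij_betw_the_inv_into[OF b])
    define \<rho> where "\<rho> k = (if k < n then \<gamma> (\<sigma> k) else k)" for k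
    have "bij_betw \<rho> {..<n} {..<n}"
    proof -
      have "bij_betw (\<gamma> \<circ> \<sigma>) {..<n} {..<n}" by (rule bij_betw_trans[OF sb gb])
      then show ?thesis by (rule bij_betw_cong[THEN iffD1, rotated]) (auto simp: \<rho>_def)
    qed
    then have rp: "\<rho> permutes {..<n}" by (rule bij_imp_permutes) (auto simp: \<rho>_def)
    have "\<Phi> \<rho> = \<sigma>"
    proof
      fix k show "\<Phi> \<rho> k = \<sigma> k"
      proof (cases "k < n")
        case True
        have "\<sigma> k \<in> J" using sb True by (auto simp: bij_betw_def)
        then show ?thesis using True unfolding \<Phi>_def \<rho>_def \<gamma>_def
          by (simp add: f_the_inv_into_f_bij_betw[OF b])
      next
        case False
        then show ?thesis using s by (auto simp: \<Phi>_def PiE_def extensional_def)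
      qed
    qed
    then show "\<exists>\<rho>\<in>{\<rho>. \<rho> permutes {..<n}}. \<sigma> = \<Phi> \<rho>" using rp by auto
  qed
  then have "card {\<sigma> \<in> {..<n} \<rightarrow>\<^sub>E {..<N}. inj_on \<sigma> {..<n} \<and> \<sigma> ` {..<n} = J} = card {\<rho>. \<rho> permutes {..<n}}"
    by (simp add: bij_betw_same_card)
  also have "\<dots> = fact n" by (rule card_permutations) auto
  finally show ?thesis .
qed

lemma reindex_meas:
  assumes "\<And>j. j \<in> J \<Longrightarrow> g j \<in> K"
  shows "(\<lambda>\<omega>. \<lambda>j\<in>J. \<omega> (g j)) \<in> measurable (PiM K (\<lambda>_. lborel)) (PiM J (\<lambda>_. lborel::'a::euclidean_space measure))"
  apply (rule measurable_restrict)
  apply (rule measurable_component_singleton)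
  using assms by auto

lemma Ebern_restrict: "Ebern J (restrict y J) = Ebern J y"
  by (auto simp: Ebern_def fun_eq_iff)


lemma OX_Ebern:
  assumes s: "inj_on \<sigma> {..<n}" and i: "i < N"
  shows "OX N n x \<sigma> i = Ebern (\<sigma> ` {..<n}) (\<lambda>j\<in>\<sigma> ` {..<n}. x (the_inv_into {..<n} \<sigma> j)) i"
proof (cases "i \<in> \<sigma> ` {..<n}")
  case True
  then obtain k where k: "k < n" "\<sigma> k = i" by auto
  have "{k. k < n \<and> \<sigma> k = i} = {k}" using s k by (auto simp: inj_on_def)
  moreover have "the_inv_into {..<n} \<sigma> i = k" using s k by (auto intro: the_inv_into_f_eq)
  ultimately show ?thesis using True i by (simp add: OX_def Ebern_def)
next
  case False
  then have "{k. k < n \<and> \<sigma> k = i} = {}" by auto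
  then show ?thesis using False i by (simp add: OX_def Ebern_def)
qed

lemma Kn:
  fixes H :: "(nat \<Rightarrow> 'a::euclidean_space set) \<Rightarrow> ennreal" and F :: "'a set \<Rightarrow> ennreal"
  assumes F: "\<And>x. inj_on x {..<n} \<Longrightarrow> F (x ` {..<n}) = (\<Sum>Xs\<in>oparts N (x`{..<n}). H Xs)"
    and Hz: "\<And>Xs i. i < N \<Longrightarrow> finite (Xs i) \<Longrightarrow> 2 \<le> card (Xs i) \<Longrightarrow> H Xs = 0"
    and Hloc: "\<And>Xs Ys. (\<And>i. i < N \<Longrightarrow> Xs i = Ys i) \<Longrightarrow> H Xs = H Ys"
    and Hm: "\<And>J. J \<subseteq> {..<N} \<Longrightarrow> (\<lambda>y. H (Ebern J y)) \<in> borel_measurable (PiM J (\<lambda>_. lborel))"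
  shows "(\<integral>\<^sup>+x. F (x ` {..<n}) \<partial>PiM {..<n} (\<lambda>_. lborel)) =
    of_nat (fact n) * (\<Sum>J\<in>{J\<in>Pow {..<N}. card J = n}. \<integral>\<^sup>+y. H (Ebern J y) \<partial>PiM J (\<lambda>_. lborel))"
proof -
  define Inj where "Inj = {\<sigma> \<in> {..<n} \<rightarrow>\<^sub>E {..<N}. inj_on \<sigma> {..<n}}"
  define I where "I J = (\<integral>\<^sup>+y. H (Ebern J y) \<partial>PiM J (\<lambda>_. lborel::'a measure))" for J
  define R where "R \<sigma> x = H (Ebern (\<sigma> ` {..<n}) (\<lambda>j\<in>\<sigma> ` {..<n}. x (the_inv_into {..<n} \<sigma> j)))" for \<sigma> and x :: "nat \<Rightarrow> 'a"
  have finPiE: "finite ({..<n} \<rightarrow>\<^sub>E {..<N})" by (rule finite_PiE) auto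
  have finInj: "finite Inj" unfolding Inj_def by (rule finite_subset[OF _ finPiE]) auto
  have pw: "F (x ` {..<n}) = (\<Sum>\<sigma>\<in>Inj. R \<sigma> x)" if x: "inj_on x {..<n}" for x
  proof -
    have "F (x ` {..<n}) = (\<Sum>\<sigma>\<in>{..<n} \<rightarrow>\<^sub>E {..<N}. H (OX N n x \<sigma>))"
      using F[OF x] sum.reindex_bij_betw[OF OX_bij[OF x, of N], of H] by simp
    also have "\<dots> = (\<Sum>\<sigma>\<in>Inj. H (OX N n x \<sigma>))"
    proof (rule sum.mono_neutral_right[OF finPiE])
      show "Inj \<subseteq> {..<n} \<rightarrow>\<^sub>E {..<N}" by (auto simp: Inj_def)
      show "\<forall>\<sigma>\<in>({..<n} \<rightarrow>\<^sub>E {..<N}) - Inj. H (OX N n x \<sigma>) = 0"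
      proof
        fix \<sigma> assume "\<sigma> \<in> ({..<n} \<rightarrow>\<^sub>E {..<N}) - Inj"
        then have s: "\<sigma> \<in> {..<n} \<rightarrow>\<^sub>E {..<N}" and ni: "\<not> inj_on \<sigma> {..<n}" by (auto simp: Inj_def)
        then obtain k1 k2 where k: "k1 < n" "k2 < n" "k1 \<noteq> k2" "\<sigma> k1 = \<sigma> k2"
          by (auto simp: inj_on_def)
        define i where "i = \<sigma> k1"
        have i: "i < N" using s k by (auto simp: i_def)
        have sub: "{x k1, x k2} \<subseteq> OX N n x \<sigma> i" using k i by (auto simp: OX_def i_def)
        have "x k1 \<noteq> x k2" using x k by (auto simp: inj_on_def)
        then have "2 \<le> card (OX N n x \<sigma> i)"
          using card_mono[OF _ sub] by (simp add: OX_def i)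
        then show "H (OX N n x \<sigma>) = 0" using i by (intro Hz[of i]) (auto simp: OX_def)
      qed
    qed
    also have "\<dots> = (\<Sum>\<sigma>\<in>Inj. R \<sigma> x)"
      unfolding R_def by (intro sum.cong refl Hloc OX_Ebern) (auto simp: Inj_def)
    finally show ?thesis .
  qed
  have Rm: "R \<sigma> \<in> borel_measurable (PiM {..<n} (\<lambda>_. lborel))" if s: "\<sigma> \<in> Inj" for \<sigma>
  proof -
    have J: "\<sigma> ` {..<n} \<subseteq> {..<N}" using s by (auto simp: Inj_def)
    have "(\<lambda>\<omega>. \<lambda>j\<in>\<sigma> ` {..<n}. \<omega> (the_inv_into {..<n} \<sigma> j)) \<in> measurable (PiM {..<n} (\<lambda>_. lborel)) (PiM (\<sigma> ` {..<n}) (\<lambda>_. lborel::'a measure))"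
    proof (rule reindex_meas)
      fix j assume "j \<in> \<sigma> ` {..<n}"
      moreover have "inj_on \<sigma> {..<n}" using s by (simp add: Inj_def)
      ultimately show "the_inv_into {..<n} \<sigma> j \<in> {..<n}" by (intro the_inv_into_into) simp_all
    qed
    from measurable_comp[OF this Hm[OF J]] show ?thesis by (simp add: R_def[abs_def] comp_def)
  qed
  have RI: "(\<integral>\<^sup>+x. R \<sigma> x \<partial>PiM {..<n} (\<lambda>_. lborel)) = I (\<sigma> ` {..<n})" if s: "\<sigma> \<in> Inj" for \<sigma>
  proof -
    have J: "\<sigma> ` {..<n} \<subseteq> {..<N}" using s by (auto simp: Inj_def)
    have b: "bij_betw (the_inv_into {..<n} \<sigma>) (\<sigma> ` {..<n}) {..<n}"
      using s by (intro bij_betw_the_inv_into) (auto simp: Inj_def bij_betw_def)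
    show ?thesis unfolding I_def R_def
      by (rule nn_integral_PiM_lb_reindex[OF b _ Hm[OF J], symmetric]) simp
  qed
  have "(\<integral>\<^sup>+x. F (x ` {..<n}) \<partial>PiM {..<n} (\<lambda>_. lborel)) = (\<integral>\<^sup>+x. (\<Sum>\<sigma>\<in>Inj. R \<sigma> x) \<partial>PiM {..<n} (\<lambda>_. lborel))"
    by (rule nn_integral_cong_AE) (rule AE_mp[OF AE_inj], intro AE_I2 impI, rule pw)
  also have "\<dots> = (\<Sum>\<sigma>\<in>Inj. \<integral>\<^sup>+x. R \<sigma> x \<partial>PiM {..<n} (\<lambda>_. lborel))"
    by (rule nn_integral_sum) (use Rm in auto)
  also have "\<dots> = (\<Sum>\<sigma>\<in>Inj. I (\<sigma> ` {..<n}))" by (rule sum.cong) (auto simp: RI)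
  also have "\<dots> = (\<Sum>J\<in>{J\<in>Pow {..<N}. card J = n}. (\<Sum>\<sigma>\<in>{\<sigma>\<in>Inj. \<sigma> ` {..<n} = J}. I (\<sigma> ` {..<n})))"
  proof (rule sum.group[symmetric, OF finInj])
    show "finite {J\<in>Pow {..<N}. card J = n}" by simp
    show "(\<lambda>\<sigma>. \<sigma> ` {..<n}) ` Inj \<subseteq> {J\<in>Pow {..<N}. card J = n}"
    proof
      fix J assume "J \<in> (\<lambda>\<sigma>. \<sigma> ` {..<n}) ` Inj"
      then obtain \<sigma> where s: "\<sigma> \<in> Inj" and J: "J = \<sigma> ` {..<n}" by blast
      have "inj_on \<sigma> {..<n}" "\<sigma> \<in> {..<n} \<rightarrow>\<^sub>E {..<N}" using s by (simp_all add: Inj_def)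
      then have "J \<subseteq> {..<N}" "card J = n" unfolding J by (auto simp: card_image)
      then show "J \<in> {J\<in>Pow {..<N}. card J = n}" by simp
    qed
  qed
  also have "\<dots> = (\<Sum>J\<in>{J\<in>Pow {..<N}. card J = n}. of_nat (fact n) * I J)"
  proof (rule sum.cong[OF refl])
    fix J assume J: "J \<in> {J\<in>Pow {..<N}. card J = n}"
    have ceq: "{\<sigma>\<in>Inj. \<sigma> ` {..<n} = J} = {\<sigma> \<in> {..<n} \<rightarrow>\<^sub>E {..<N}. inj_on \<sigma> {..<n} \<and> \<sigma> ` {..<n} = J}"
      by (auto simp: Inj_def)
    have c: "card {\<sigma>\<in>Inj. \<sigma> ` {..<n} = J} = fact n" unfolding ceq using J by (intro card_inj_image) (auto intro: finite_subset)
    have "(\<Sum>\<sigma>\<in>{\<sigma>\<in>Inj. \<sigma> ` {..<n} = J}. I (\<sigma> ` {..<n})) = (\<Sum>\<sigma>\<in>{\<sigma>\<in>Inj. \<sigma> ` {..<n} = J}. I J)"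
      by (rule sum.cong) auto
    also have "\<dots> = of_nat (card {\<sigma>\<in>Inj. \<sigma> ` {..<n} = J}) * I J" by simp
    finally show "(\<Sum>\<sigma>\<in>{\<sigma>\<in>Inj. \<sigma> ` {..<n} = J}. I (\<sigma> ` {..<n})) = of_nat (fact n) * I J" by (simp only: c)
  qed
  finally show ?thesis by (simp add: sum_distrib_left I_def)
qed


lemma fact_cancel: "ennreal (1 / fact m) * (of_nat (fact m) * s) = s"
proof -
  have "ennreal (1 / fact m) * of_nat (fact m) = ennreal (1 / fact m * fact m)"
    by (simp add: ennreal_of_nat_eq_real_of_nat ennreal_mult[symmetric])
  also have "\<dots> = 1" by simp
  finally show ?thesis by (simp add: mult.assoc[symmetric])
qed

lemma set_int_oparts:
  fixes H :: "(nat \<Rightarrow> 'a::euclidean_space set) \<Rightarrow> ennreal" and F :: "'a set \<Rightarrow> ennreal"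
  assumes F: "\<And>(n::nat) x. inj_on x {..<n} \<Longrightarrow> F (x ` {..<n}) = (\<Sum>Xs\<in>oparts N (x`{..<n}). H Xs)"
    and Hz: "\<And>Xs i. i < N \<Longrightarrow> finite (Xs i) \<Longrightarrow> 2 \<le> card (Xs i) \<Longrightarrow> H Xs = 0"
    and Hloc: "\<And>Xs Ys. (\<And>i. i < N \<Longrightarrow> Xs i = Ys i) \<Longrightarrow> H Xs = H Ys"
    and Hm: "\<And>J. J \<subseteq> {..<N} \<Longrightarrow> (\<lambda>y. H (Ebern J y)) \<in> borel_measurable (PiM J (\<lambda>_. lborel))"
  shows "set_int F = (\<Sum>J\<in>Pow {..<N}. \<integral>\<^sup>+y. H (Ebern J y) \<partial>PiM J (\<lambda>_. lborel))"
proof -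
  define S where "S m = (\<Sum>J\<in>{J\<in>Pow {..<N}. card J = m}. \<integral>\<^sup>+y. H (Ebern J y) \<partial>PiM J (\<lambda>_. lborel::'a measure))" for m
  have K: "(\<integral>\<^sup>+x. F (x ` {..<m}) \<partial>PiM {..<m} (\<lambda>_. lborel)) = of_nat (fact m) * S m" for m
    unfolding S_def by (rule Kn[OF F[where n=m] Hz Hloc Hm])
  have F0: "F {} = S 0"
  proof -
    have "(\<integral>\<^sup>+x. F (x ` {..<0::nat}) \<partial>PiM {..<0::nat} (\<lambda>_. lborel::'a measure)) = F {}"
      by (simp add: PiM_empty nn_integral_count_space_finite)
    then show ?thesis using K[of 0] by simp
  qed
  have Sz: "S m = 0" if "N < m" for m
  proof -
    have c: "card J \<le> N" if "J \<subseteq> {..<N}" for J using card_mono[OF finite_lessThan that] by simp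
    have "{J\<in>Pow {..<N}. card J = m} = {}"
    proof (rule equals0I)
      fix J assume "J \<in> {J\<in>Pow {..<N}. card J = m}"
      then have "J \<subseteq> {..<N}" "card J = m" by auto
      then show False using c[of J] that by linarith
    qed
    then show ?thesis unfolding S_def by (simp only: sum.empty)
  qed
  have "set_int F = S 0 + (\<Sum>n. S (Suc n))"
    unfolding set_int_def F0 K fact_cancel ..
  also have "(\<Sum>n. S (Suc n)) = (\<Sum>n<N. S (Suc n))"
    by (rule suminf_finite) (auto intro: Sz)
  also have "S 0 + (\<Sum>n<N. S (Suc n)) = (\<Sum>m<Suc N. S m)"
    by (simp only: sum.lessThan_Suc_shift)
  also have "\<dots> = (\<Sum>J\<in>Pow {..<N}. \<integral>\<^sup>+y. H (Ebern J y) \<partial>PiM J (\<lambda>_. lborel))"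
    unfolding S_def
  proof (rule sum.group)
    have c: "card J \<le> N" if "J \<subseteq> {..<N}" for J using card_mono[OF finite_lessThan that] by simp
    show "card ` Pow {..<N} \<subseteq> {..<Suc N}"
      using c by (auto simp: less_Suc_eq_le)
  qed auto
  finally show ?thesis .
qed


lemma extend_perm:
  assumes A: "finite A" and D: "D \<subseteq> A" and f: "inj_on f D" "f ` D \<subseteq> A"
  shows "\<exists>\<pi>. \<pi> permutes A \<and> (\<forall>x\<in>D. \<pi> x = f x)"
proof -
  have "card (A - D) = card (A - f ` D)"
    using A D f by (simp add: card_Diff_subset card_image finite_subset)
  then obtain h where h: "bij_betw h (A - D) (A - f ` D)"
    using finite_same_card_bij[of "A - D" "A - f ` D"] A by auto
  define \<pi> where "\<pi> x = (if x \<in> D then f x else if x \<in> A then h x else x)" for x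
  have b1: "bij_betw \<pi> D (f ` D)"
    using f by (auto simp: bij_betw_def inj_on_def \<pi>_def image_def)
  have b2: "bij_betw \<pi> (A - D) (A - f ` D)"
    using h by (rule bij_betw_cong[THEN iffD1, rotated]) (auto simp: \<pi>_def)
  have "bij_betw \<pi> (D \<union> (A - D)) (f ` D \<union> (A - f ` D))"
    by (rule bij_betw_combine[OF b1 b2]) auto
  moreover have "D \<union> (A - D) = A" "f ` D \<union> (A - f ` D) = A" using D f by auto
  ultimately have "bij_betw \<pi> A A" by simp
  then have "\<pi> permutes A" by (rule bij_imp_permutes) (use D in \<open>auto simp: \<pi>_def\<close>)
  then show ?thesis by (auto simp: \<pi>_def)
qed

definition CT :: "real \<Rightarrow> real \<Rightarrow> ('a \<Rightarrow> 'a \<Rightarrow> real) \<Rightarrow> nat \<Rightarrow> (nat \<Rightarrow> 'a set) \<Rightarrow> (nat \<Rightarrow> 'a set) \<Rightarrow> real set" where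
  "CT p c d N Ys Zs = {\<Sum>i<N. dbarB c d (Ys i) (Zs (\<pi> i)) powr p | \<pi>. \<pi> permutes {..<N}}"

lemma CT_cong:
  assumes "\<And>i. i < N \<Longrightarrow> Ys i = Ys2 i" "\<And>i. i < N \<Longrightarrow> Zs i = Zs2 i"
  shows "CT p c d N Ys Zs = CT p c d N Ys2 Zs2"
proof -
  have "(\<Sum>i<N. dbarB c d (Ys i) (Zs (\<pi> i)) powr p) = (\<Sum>i<N. dbarB c d (Ys2 i) (Zs2 (\<pi> i)) powr p)"
    if pp: "\<pi> permutes {..<N}" for \<pi>
  proof (rule sum.cong[OF refl])
    fix i assume "i \<in> {..<N}"
    moreover then have "\<pi> i < N" using pp by (metis lessThan_iff permutes_in_image)
    ultimately show "dbarB c d (Ys i) (Zs (\<pi> i)) powr p = dbarB c d (Ys2 i) (Zs2 (\<pi> i)) powr p"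
      using assms by simp
  qed
  note eq = this
  show ?thesis unfolding CT_def
  proof (intro set_eqI iffI)
    fix v assume "v \<in> {\<Sum>i<N. dbarB c d (Ys i) (Zs (\<pi> i)) powr p | \<pi>. \<pi> permutes {..<N}}"
    then obtain \<pi> where "\<pi> permutes {..<N}" "v = (\<Sum>i<N. dbarB c d (Ys i) (Zs (\<pi> i)) powr p)" by blast
    then show "v \<in> {\<Sum>i<N. dbarB c d (Ys2 i) (Zs2 (\<pi> i)) powr p | \<pi>. \<pi> permutes {..<N}}"
      using eq by (intro CollectI exI[of _ "\<pi>"] conjI) simp_all
  next
    fix v assume "v \<in> {\<Sum>i<N. dbarB c d (Ys2 i) (Zs2 (\<pi> i)) powr p | \<pi>. \<pi> permutes {..<N}}"
    then obtain \<pi> where "\<pi> permutes {..<N}" "v = (\<Sum>i<N. dbarB c d (Ys2 i) (Zs2 (\<pi> i)) powr p)" by blast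
    then show "v \<in> {\<Sum>i<N. dbarB c d (Ys i) (Zs (\<pi> i)) powr p | \<pi>. \<pi> permutes {..<N}}"
      using eq by (intro CollectI exI[of _ "\<pi>"] conjI) simp_all
  qed
qed

lemma CT_perm_left:
  assumes t: "\<tau> permutes {..<N}"
  shows "CT p c d N (\<lambda>i. Ys (\<tau> i)) Zs = CT p c d N Ys Zs"
proof -
  have key: "(\<Sum>i<N. dbarB c d (Ys (\<tau> i)) (Zs (\<pi> i)) powr p) = (\<Sum>i<N. dbarB c d (Ys i) (Zs ((\<pi> \<circ> inv \<tau>) i)) powr p)"
    if "\<pi> permutes {..<N}" for \<pi>
  proof -
    have "(\<Sum>i<N. dbarB c d (Ys i) (Zs ((\<pi> \<circ> inv \<tau>) i)) powr p) = (\<Sum>i<N. dbarB c d (Ys (\<tau> i)) (Zs ((\<pi> \<circ> inv \<tau>) (\<tau> i))) powr p)"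
      using sum.permute[OF t, of "\<lambda>i. dbarB c d (Ys i) (Zs ((\<pi> \<circ> inv \<tau>) i)) powr p"] by (simp add: comp_def)
    also have "\<dots> = (\<Sum>i<N. dbarB c d (Ys (\<tau> i)) (Zs (\<pi> i)) powr p)"
      using permutes_inverses(2)[OF t] by simp
    finally show ?thesis by simp
  qed
  show ?thesis unfolding CT_def
  proof (intro set_eqI iffI)
    fix v assume "v \<in> {\<Sum>i<N. dbarB c d (Ys (\<tau> i)) (Zs (\<pi> i)) powr p | \<pi>. \<pi> permutes {..<N}}"
    then obtain \<pi> where "\<pi> permutes {..<N}" "v = (\<Sum>i<N. dbarB c d (Ys (\<tau> i)) (Zs (\<pi> i)) powr p)" by blast
    moreover have "\<pi> \<circ> inv \<tau> permutes {..<N}" using calculation(1) t by (simp add: permutes_compose permutes_inv)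
    ultimately show "v \<in> {\<Sum>i<N. dbarB c d (Ys i) (Zs (\<pi> i)) powr p | \<pi>. \<pi> permutes {..<N}}"
      using key by (intro CollectI exI[of _ "\<pi> \<circ> inv \<tau>"] conjI) simp_all
  next
    fix v assume "v \<in> {\<Sum>i<N. dbarB c d (Ys i) (Zs (\<pi> i)) powr p | \<pi>. \<pi> permutes {..<N}}"
    then obtain \<pi> where pp: "\<pi> permutes {..<N}" and v: "v = (\<Sum>i<N. dbarB c d (Ys i) (Zs (\<pi> i)) powr p)" by blast
    have pp2: "\<pi> \<circ> \<tau> permutes {..<N}" using pp t by (simp add: permutes_compose)
    have "(\<pi> \<circ> \<tau>) \<circ> inv \<tau> = \<pi>" using permutes_inverses(1)[OF t] by (auto simp: fun_eq_iff)
    then have "v = (\<Sum>i<N. dbarB c d (Ys (\<tau> i)) (Zs ((\<pi> \<circ> \<tau>) i)) powr p)" using key[OF pp2] v by simp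
    with pp2 show "v \<in> {\<Sum>i<N. dbarB c d (Ys (\<tau> i)) (Zs (\<pi> i)) powr p | \<pi>. \<pi> permutes {..<N}}"
      by (intro CollectI exI[of _ "\<pi> \<circ> \<tau>"] conjI) simp_all
  qed
qed

lemma CT_perm_right:
  assumes t: "\<tau> permutes {..<N}"
  shows "CT p c d N Ys (\<lambda>i. Zs (\<tau> i)) = CT p c d N Ys Zs"
proof -
  show ?thesis unfolding CT_def
  proof (intro set_eqI iffI)
    fix v assume "v \<in> {\<Sum>i<N. dbarB c d (Ys i) (Zs (\<tau> (\<pi> i))) powr p | \<pi>. \<pi> permutes {..<N}}"
    then obtain \<pi> where "\<pi> permutes {..<N}" "v = (\<Sum>i<N. dbarB c d (Ys i) (Zs (\<tau> (\<pi> i))) powr p)" by blast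
    moreover have "\<tau> \<circ> \<pi> permutes {..<N}" using calculation(1) t by (simp add: permutes_compose)
    ultimately have "v = (\<Sum>i<N. dbarB c d (Ys i) (Zs ((\<tau> \<circ> \<pi>) i)) powr p)" "\<tau> \<circ> \<pi> permutes {..<N}" by simp_all
    then show "v \<in> {\<Sum>i<N. dbarB c d (Ys i) (Zs (\<pi> i)) powr p | \<pi>. \<pi> permutes {..<N}}"
      by (intro CollectI exI[of _ "\<tau> \<circ> \<pi>"] conjI) simp_all
  next
    fix v assume "v \<in> {\<Sum>i<N. dbarB c d (Ys i) (Zs (\<pi> i)) powr p | \<pi>. \<pi> permutes {..<N}}"
    then obtain \<pi> where pp: "\<pi> permutes {..<N}" and v: "v = (\<Sum>i<N. dbarB c d (Ys i) (Zs (\<pi> i)) powr p)" by blast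
    have pp2: "inv \<tau> \<circ> \<pi> permutes {..<N}" using pp t by (simp add: permutes_compose permutes_inv)
    have "\<tau> ((inv \<tau> \<circ> \<pi>) i) = \<pi> i" for i using permutes_inverses(1)[OF t] by simp
    then have "v = (\<Sum>i<N. dbarB c d (Ys i) (Zs (\<tau> ((inv \<tau> \<circ> \<pi>) i))) powr p)" using v by simp
    with pp2 show "v \<in> {\<Sum>i<N. dbarB c d (Ys i) (Zs (\<tau> (\<pi> i))) powr p | \<pi>. \<pi> permutes {..<N}}" by (intro CollectI exI[of _ "inv \<tau> \<circ> \<pi>"] conjI) simp_all
  qed
qed

lemma dbarB_sym:
  assumes "\<And>x y. x \<in> S \<Longrightarrow> y \<in> S \<Longrightarrow> d x y = d y x"
    and "X = {} \<or> (\<exists>x\<in>S. X = {x})" "Y = {} \<or> (\<exists>y\<in>S. Y = {y})"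
  shows "dbarB c d X Y = dbarB c d Y X"
  using assms by (auto simp: dbarB_def dcut_def)

lemma CT_sym:
  assumes ds: "\<And>x y. x \<in> S \<Longrightarrow> y \<in> S \<Longrightarrow> d x y = d y x"
    and Y: "\<And>i. i < N \<Longrightarrow> Ys i = {} \<or> (\<exists>x\<in>S. Ys i = {x})"
    and Z: "\<And>i. i < N \<Longrightarrow> Zs i = {} \<or> (\<exists>x\<in>S. Zs i = {x})"
  shows "CT p c d N Zs Ys = CT p c d N Ys Zs"
proof -
  have key: "(\<Sum>i<N. dbarB c d (Zs i) (Ys (\<pi> i)) powr p) = (\<Sum>i<N. dbarB c d (Ys i) (Zs (inv \<pi> i)) powr p)"
    if pp: "\<pi> permutes {..<N}" for \<pi>
  proof -
    have "(\<Sum>i<N. dbarB c d (Ys i) (Zs (inv \<pi> i)) powr p) = (\<Sum>i<N. dbarB c d (Ys (\<pi> i)) (Zs (inv \<pi> (\<pi> i))) powr p)"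
      using sum.permute[OF pp, of "\<lambda>i. dbarB c d (Ys i) (Zs (inv \<pi> i)) powr p"] by (simp add: comp_def)
    also have "\<dots> = (\<Sum>i<N. dbarB c d (Ys (\<pi> i)) (Zs i) powr p)"
      using permutes_inverses(2)[OF pp] by simp
    also have "\<dots> = (\<Sum>i<N. dbarB c d (Zs i) (Ys (\<pi> i)) powr p)"
    proof (rule sum.cong[OF refl])
      fix i assume i: "i \<in> {..<N}"
      then have "\<pi> i < N" using pp by (metis lessThan_iff permutes_in_image)
      then show "dbarB c d (Ys (\<pi> i)) (Zs i) powr p = dbarB c d (Zs i) (Ys (\<pi> i)) powr p"
        using dbarB_sym[OF ds Y Z] i by simp
    qed
    finally show ?thesis by simp
  qed
  show ?thesis unfolding CT_def
  proof (intro set_eqI iffI)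
    fix v assume "v \<in> {\<Sum>i<N. dbarB c d (Zs i) (Ys (\<pi> i)) powr p | \<pi>. \<pi> permutes {..<N}}"
    then obtain \<pi> where pp: "\<pi> permutes {..<N}" and "v = (\<Sum>i<N. dbarB c d (Zs i) (Ys (\<pi> i)) powr p)" by blast
    moreover have "inv \<pi> permutes {..<N}" using pp by (simp add: permutes_inv)
    ultimately show "v \<in> {\<Sum>i<N. dbarB c d (Ys i) (Zs (\<pi> i)) powr p | \<pi>. \<pi> permutes {..<N}}"
      using key by (intro CollectI exI[of _ "inv \<pi>"] conjI) simp_all
  next
    fix v assume "v \<in> {\<Sum>i<N. dbarB c d (Ys i) (Zs (\<pi> i)) powr p | \<pi>. \<pi> permutes {..<N}}"
    then obtain \<pi> where pp: "\<pi> permutes {..<N}" and v: "v = (\<Sum>i<N. dbarB c d (Ys i) (Zs (\<pi> i)) powr p)" by blast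
    have pp2: "inv \<pi> permutes {..<N}" using pp by (simp add: permutes_inv)
    have "inv (inv \<pi>) = \<pi>" using pp by (simp add: permutes_inv_inv)
    then have "v = (\<Sum>i<N. dbarB c d (Zs i) (Ys (inv \<pi> i)) powr p)" using key[OF pp2] v by simp
    with pp2 show "v \<in> {\<Sum>i<N. dbarB c d (Zs i) (Ys (\<pi> i)) powr p | \<pi>. \<pi> permutes {..<N}}"
      by (intro CollectI exI[of _ "inv \<pi>"] conjI) simp_all
  qed
qed


lemma Min_eqI2:
  fixes A B :: "'b::linorder set"
  assumes "finite A" "A \<noteq> {}" "finite B" "B \<noteq> {}"
    and "\<And>a. a \<in> A \<Longrightarrow> \<exists>b\<in>B. b \<le> a" and "\<And>b. b \<in> B \<Longrightarrow> \<exists>a\<in>A. a \<le> b"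
  shows "Min A = Min B"
proof (rule antisym)
  obtain a where "a \<in> A" "a \<le> Min B" using assms(6)[OF Min_in[OF assms(3,4)]] by blast
  then show "Min A \<le> Min B" using Min_le[OF assms(1)] order_trans by blast
next
  obtain b where "b \<in> B" "b \<le> Min A" using assms(5)[OF Min_in[OF assms(1,2)]] by blast
  then show "Min B \<le> Min A" using Min_le[OF assms(3)] order_trans by blast
qed

lemma dbarB_simps:
  "dbarB c d {} {} = 0" "dbarB c d {a} {} = c" "dbarB c d {} {b} = c" "dbarB c d {a} {b} = dcut c d a b"
  by (auto simp: dbarB_def)

lemma dcut_bounds:
  assumes "c > 0" "0 \<le> d a b" "p > 0"
  shows "0 \<le> dcut c d a b powr p" "dcut c d a b powr p \<le> c powr p"
  using assms by (auto simp: dcut_def intro!: powr_mono2)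

lemma canon_main:
  fixes xs ys :: "'a list"
  assumes p: "p > 0" and c: "c > 0" and dnn: "\<And>x y. x \<in> S \<Longrightarrow> y \<in> S \<Longrightarrow> 0 \<le> d x y"
    and xs: "distinct xs" "set xs \<subseteq> S" "length xs \<le> N"
    and ys: "set ys \<subseteq> S" "length ys \<le> length xs"
  shows "Min {(\<Sum>j<length ys. dcut c d (xs ! (\<rho> j)) (ys ! j) powr p) + c powr p * real (length xs - length ys) | \<rho>. \<rho> permutes {..<length xs}}
    = Min (CT p c d N (\<lambda>i. if i < length xs then {xs!i} else {}) (\<lambda>i. if i < length ys then {ys!i} else {}))"
proof -
  define n where "n = length xs"
  define m where "m = length ys"
  define Ys where "Ys = (\<lambda>i. if i < n then {xs!i} else {})"
  define Zs where "Zs = (\<lambda>i. if i < m then {ys!i} else {})"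
  define cost where "cost \<rho> = (\<Sum>j<m. dcut c d (xs ! (\<rho> j)) (ys ! j) powr p) + c powr p * real (n - m)" for \<rho> :: "nat \<Rightarrow> nat"
  define C where "C \<pi> = (\<Sum>i<N. dbarB c d (Ys i) (Zs (\<pi> i)) powr p)" for \<pi> :: "nat \<Rightarrow> nat"
  have mn: "m \<le> n" "n \<le> N" using xs ys by (auto simp: m_def n_def)
  have xS: "i < n \<Longrightarrow> xs ! i \<in> S" for i using xs by (auto simp: n_def)
  have yS: "j < m \<Longrightarrow> ys ! j \<in> S" for j using ys by (auto simp: m_def)
  have e_b: "0 \<le> dcut c d (xs ! i) (ys ! j) powr p" "dcut c d (xs ! i) (ys ! j) powr p \<le> c powr p"
    if "i < n" "j < m" for i j
  proof -
    have "0 \<le> d (xs ! i) (ys ! j)" using dnn[OF xS yS] that .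
    from dcut_bounds[of c d, OF c this p] show "0 \<le> dcut c d (xs ! i) (ys ! j) powr p" "dcut c d (xs ! i) (ys ! j) powr p \<le> c powr p" by auto
  qed
  have A: "\<exists>b\<in>{C \<pi> | \<pi>. \<pi> permutes {..<N}}. b \<le> cost \<rho>" if r: "\<rho> permutes {..<n}" for \<rho>
  proof -
    have rN: "\<rho> permutes {..<N}" by (rule permutes_subset[OF r]) (use mn in auto)
    define \<pi> where "\<pi> = inv \<rho>"
    have pN: "\<pi> permutes {..<N}" unfolding \<pi>_def using rN by (rule permutes_inv)
    have pn: "\<pi> permutes {..<n}" unfolding \<pi>_def using r by (rule permutes_inv)
    have "C \<pi> = (\<Sum>i<n. dbarB c d (Ys i) (Zs (\<pi> i)) powr p)"
      unfolding C_def
    proof (rule sum.mono_neutral_right)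
      show "\<forall>i\<in>{..<N} - {..<n}. dbarB c d (Ys i) (Zs (\<pi> i)) powr p = 0"
      proof
        fix i assume i: "i \<in> {..<N} - {..<n}"
        then have "\<pi> i = i" using pn by (auto intro: permutes_not_in)
        then show "dbarB c d (Ys i) (Zs (\<pi> i)) powr p = 0" using i mn by (auto simp: Ys_def Zs_def dbarB_simps)
      qed
    qed (use mn in auto)
    also have "\<dots> = (\<Sum>j<n. dbarB c d (Ys (\<rho> j)) (Zs (\<pi> (\<rho> j))) powr p)"
      using sum.permute[OF r, of "\<lambda>i. dbarB c d (Ys i) (Zs (\<pi> i)) powr p"] by (simp add: comp_def)
    also have "\<dots> = (\<Sum>j<n. dbarB c d (Ys (\<rho> j)) (Zs j) powr p)"
      unfolding \<pi>_def using permutes_inverses(2)[OF r] by simp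
    also have "\<dots> = (\<Sum>j<m. dbarB c d (Ys (\<rho> j)) (Zs j) powr p) + (\<Sum>j\<in>{m..<n}. dbarB c d (Ys (\<rho> j)) (Zs j) powr p)"
      using mn by (simp add: lessThan_atLeast0 sum.atLeastLessThan_concat)
    also have "(\<Sum>j<m. dbarB c d (Ys (\<rho> j)) (Zs j) powr p) = (\<Sum>j<m. dcut c d (xs ! (\<rho> j)) (ys ! j) powr p)"
    proof (rule sum.cong[OF refl])
      fix j assume "j \<in> {..<m}"
      moreover then have "\<rho> j < n" using r mn by (metis lessThan_iff permutes_in_image less_le_trans)
      ultimately show "dbarB c d (Ys (\<rho> j)) (Zs j) powr p = dcut c d (xs ! (\<rho> j)) (ys ! j) powr p"
        by (simp add: Ys_def Zs_def dbarB_simps)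
    qed
    also have "(\<Sum>j\<in>{m..<n}. dbarB c d (Ys (\<rho> j)) (Zs j) powr p) = (\<Sum>j\<in>{m..<n}. c powr p)"
    proof (rule sum.cong[OF refl])
      fix j assume "j \<in> {m..<n}"
      moreover then have "\<rho> j < n" using r by (metis atLeastLessThan_iff lessThan_iff permutes_in_image)
      ultimately show "dbarB c d (Ys (\<rho> j)) (Zs j) powr p = c powr p"
        by (simp add: Ys_def Zs_def dbarB_simps)
    qed
    finally have "C \<pi> = cost \<rho>" by (simp add: cost_def mult.commute)
    then show ?thesis using pN by auto
  qed
  have B: "\<exists>a\<in>{cost \<rho> | \<rho>. \<rho> permutes {..<n}}. a \<le> C \<pi>" if pp: "\<pi> permutes {..<N}" for \<pi>
  proof -
    define D where "D = {i. i < n \<and> \<pi> i < m}"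
    define Jd where "Jd = \<pi> ` D"
    have injp: "inj \<pi>" using pp by (rule permutes_inj)
    have Jdm: "Jd \<subseteq> {..<m}" by (auto simp: Jd_def D_def)
    have Dn: "D \<subseteq> {..<n}" by (auto simp: D_def)
    have iJd: "inv \<pi> ` Jd = D" unfolding Jd_def using injp by (simp add: image_image)
    obtain \<rho> where r: "\<rho> permutes {..<n}" and rJ: "\<forall>j\<in>Jd. \<rho> j = inv \<pi> j"
    proof -
      have "inj_on (inv \<pi>) Jd" using pp by (meson inj_on_subset permutes_inj permutes_inv subset_UNIV)
      moreover have "Jd \<subseteq> {..<n}" using Jdm mn by auto
      ultimately show ?thesis using extend_perm[of "{..<n}" Jd "inv \<pi>"] iJd Dn that by auto
    qed
    define h where "h i = dbarB c d (Ys i) (Zs (\<pi> i)) powr p" for i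
    define e where "e j = dcut c d (xs ! (\<rho> j)) (ys ! j) powr p" for j
    have cD: "card Jd = card D" unfolding Jd_def using injp by (simp add: card_image inj_on_subset)
    have fD: "finite D" using Dn finite_subset by blast
    have cDm: "card D \<le> m" using card_mono[OF _ Jdm] cD by simp
    have "(\<Sum>j<m. e j) = (\<Sum>j\<in>Jd. e j) + (\<Sum>j\<in>{..<m} - Jd. e j)"
      using Jdm by (metis add.commute finite_lessThan sum.subset_diff)
    also have "(\<Sum>j\<in>Jd. e j) = (\<Sum>i\<in>D. e (\<pi> i))"
      unfolding Jd_def using injp by (simp add: sum.reindex inj_on_subset)
    also have "\<dots> = (\<Sum>i\<in>D. h i)"
    proof (rule sum.cong[OF refl])
      fix i assume i: "i \<in> D"
      have "\<rho> (\<pi> i) = i" using rJ i injp by (auto simp: Jd_def)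
      then show "e (\<pi> i) = h i" using i by (simp add: e_def h_def D_def Ys_def Zs_def dbarB_simps)
    qed
    also have "(\<Sum>j\<in>{..<m} - Jd. e j) \<le> (\<Sum>j\<in>{..<m} - Jd. c powr p)"
    proof (rule sum_mono)
      fix j assume "j \<in> {..<m} - Jd"
      moreover then have "\<rho> j < n" using r mn by (metis Diff_iff lessThan_iff permutes_in_image less_le_trans)
      ultimately show "e j \<le> c powr p" unfolding e_def using e_b by auto
    qed
    also have "(\<Sum>j\<in>{..<m} - Jd. c powr p) = real (m - card D) * c powr p"
      using Jdm cD by (simp add: card_Diff_subset finite_subset)
    finally have cost_le: "cost \<rho> \<le> (\<Sum>i\<in>D. h i) + real (m - card D) * c powr p + c powr p * real (n - m)"
      unfolding cost_def e_def by simp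
    have hnn: "0 \<le> h i" for i unfolding h_def by simp
    have s1: "(\<Sum>i<n. h i) \<le> C \<pi>"
      unfolding C_def h_def[symmetric] using mn by (intro sum_mono2) (auto simp: hnn)
    have s2: "(\<Sum>i<n. h i) = (\<Sum>i\<in>D. h i) + (\<Sum>i\<in>{..<n} - D. h i)"
      using Dn by (metis add.commute finite_lessThan sum.subset_diff)
    have s3: "(\<Sum>i\<in>{..<n} - D. h i) = (\<Sum>i\<in>{..<n} - D. c powr p)"
    proof (rule sum.cong[OF refl])
      fix i assume i: "i \<in> {..<n} - D"
      then show "h i = c powr p" by (simp add: h_def D_def Ys_def Zs_def dbarB_simps)
    qed
    have cd: "card ({..<n} - D) = n - card D" using Dn fD by (simp add: card_Diff_subset)
    have s4: "(\<Sum>i\<in>{..<n} - D. c powr p) = real (n - card D) * c powr p"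
      by (simp only: sum_constant cd)
    have "(\<Sum>i\<in>D. h i) + real (n - card D) * c powr p \<le> C \<pi>" using s1 s2 s3 s4 by linarith
    moreover have "real (m - card D) * c powr p + c powr p * real (n - m) = real (n - card D) * c powr p"
      using cDm mn by (simp add: algebra_simps of_nat_diff)
    ultimately have "cost \<rho> \<le> C \<pi>" using cost_le by simp
    then show ?thesis using r by auto
  qed
  have fin: "finite {\<pi>. \<pi> permutes {..<k}}" for k :: nat by (rule finite_permutations) simp
  have "Min {cost \<rho> | \<rho>. \<rho> permutes {..<n}} = Min {C \<pi> | \<pi>. \<pi> permutes {..<N}}"
  proof (rule Min_eqI2)
    show "finite {cost \<rho> | \<rho>. \<rho> permutes {..<n}}" using fin[of n] by (simp add: Setcompr_eq_image)
    show "finite {C \<pi> | \<pi>. \<pi> permutes {..<N}}" using fin[of N] by (simp add: Setcompr_eq_image)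
    show "{cost \<rho> | \<rho>. \<rho> permutes {..<n}} \<noteq> {}" using permutes_id by blast
    show "{C \<pi> | \<pi>. \<pi> permutes {..<N}} \<noteq> {}" using permutes_id by blast
  qed (use A B in blast)+
  then show ?thesis
    unfolding CT_def cost_def C_def Ys_def Zs_def n_def m_def .
qed


lemma enum_set_props:
  assumes "finite X"
  shows "set (enum_set X) = X" "distinct (enum_set X)" "length (enum_set X) = card X"
proof -
  have ex: "\<exists>xs. set xs = X \<and> distinct xs" using finite_distinct_list[OF assms] .
  have h: "set (enum_set X) = X \<and> distinct (enum_set X)" unfolding enum_set_def by (rule someI_ex[OF ex])
  then show s: "set (enum_set X) = X" and d: "distinct (enum_set X)" by auto
  show "length (enum_set X) = card X" using distinct_card[OF d] s by simp
qed

lemma bern_est_finite: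
  assumes "bern_est S N Ys" shows "finite (\<Union>i<N. Ys i)"
proof (rule finite_UN_I)
  fix i assume "i \<in> {..<N}"
  then show "finite (Ys i)" using assms by (auto simp: bern_est_def)
qed simp

lemma canon:
  assumes Y: "bern_est S N Ys"
  defines "xs \<equiv> enum_set (\<Union>i<N. Ys i)"
  shows "distinct xs" "set xs = (\<Union>i<N. Ys i)" "set xs \<subseteq> S" "length xs \<le> N"
    "\<exists>\<tau>. \<tau> permutes {..<N} \<and> (\<forall>i<N. Ys (\<tau> i) = (if i < length xs then {xs!i} else {}))"
proof -
  have fin: "finite (\<Union>i<N. Ys i)" by (rule bern_est_finite[OF Y])
  show d: "distinct xs" and s: "set xs = (\<Union>i<N. Ys i)" unfolding xs_def using enum_set_props[OF fin] by auto
  have Ysh: "\<And>i. i < N \<Longrightarrow> Ys i = {} \<or> (\<exists>x\<in>S. Ys i = {x})" and disj: "disjoint_family_on Ys {..<N}"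
    using Y by (auto simp: bern_est_def)
  show "set xs \<subseteq> S" unfolding s using Ysh by fastforce
  define n where "n = length xs"
  have slot: "\<exists>!i. i < N \<and> xs ! k \<in> Ys i" if k: "k < n" for k
  proof -
    have "xs ! k \<in> (\<Union>i<N. Ys i)" using k s nth_mem n_def by blast
    then obtain i where i: "i < N" "xs ! k \<in> Ys i" by auto
    moreover have "j = i" if "j < N" "xs ! k \<in> Ys j" for j
      using disj that i by (auto simp: disjoint_family_on_def)
    ultimately show ?thesis by blast
  qed
  define \<phi> where "\<phi> k = (THE i. i < N \<and> xs ! k \<in> Ys i)" for k
  have phi: "\<phi> k < N" "xs ! k \<in> Ys (\<phi> k)" if "k < n" for k
    using theI'[OF slot[OF that]] unfolding \<phi>_def by auto
  have phiY: "Ys (\<phi> k) = {xs ! k}" if "k < n" for k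
    using Ysh[OF phi(1)[OF that]] phi(2)[OF that] by auto
  have phi_inj: "inj_on \<phi> {..<n}"
  proof (rule inj_onI)
    fix k1 k2 assume "k1 \<in> {..<n}" "k2 \<in> {..<n}" "\<phi> k1 = \<phi> k2"
    then have "xs ! k1 = xs ! k2" using phiY by (metis lessThan_iff singleton_inject)
    then show "k1 = k2" using d \<open>k1 \<in> {..<n}\<close> \<open>k2 \<in> {..<n}\<close> by (simp add: n_def nth_eq_iff_index_eq)
  qed
  have phi_img: "\<phi> ` {..<n} \<subseteq> {..<N}" using phi by auto
  show nN: "length xs \<le> N" using card_inj_on_le[OF phi_inj phi_img] by (simp add: n_def)
  obtain \<tau> where t: "\<tau> permutes {..<N}" and tphi: "\<forall>k\<in>{..<n}. \<tau> k = \<phi> k"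
    using extend_perm[of "{..<N}" "{..<n}" \<phi>] phi_inj phi_img nN n_def by auto
  have "Ys (\<tau> i) = (if i < n then {xs!i} else {})" if i: "i < N" for i
  proof (cases "i < n")
    case True then show ?thesis using tphi phiY by simp
  next
    case False
    have ti: "\<tau> i < N" using t i by (metis lessThan_iff permutes_in_image)
    show ?thesis
    proof (rule ccontr)
      assume "Ys (\<tau> i) \<noteq> (if i < n then {xs!i} else {})"
      then have "Ys (\<tau> i) \<noteq> {}" using False by simp
      then obtain u where u: "u \<in> Ys (\<tau> i)" by blast
      then have "u \<in> set xs" using s ti by auto
      then obtain k where k: "k < n" "xs ! k = u" by (auto simp: in_set_conv_nth n_def)
      have "\<phi> k = \<tau> i" using slot[OF k(1)] phi[OF k(1)] u k ti by blast
      then have "\<tau> k = \<tau> i" using tphi k by simp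
      then have "k = i" using permutes_inj[OF t] by (auto simp: inj_def)
      then show False using k False by simp
    qed
  qed
  then show "\<exists>\<tau>. \<tau> permutes {..<N} \<and> (\<forall>i<N. Ys (\<tau> i) = (if i < length xs then {xs!i} else {}))"
    using t n_def by auto
qed

lemma powr_inv_cancel: "0 \<le> x \<Longrightarrow> (p::real) > 0 \<Longrightarrow> (x powr (1/p)) powr p = x"
  by (simp add: powr_powr)

lemma Min_powr:
  fixes M :: "real set"
  assumes "finite M" "M \<noteq> {}" "\<And>x. x \<in> M \<Longrightarrow> 0 \<le> x" "p > 0"
  shows "(Min ((\<lambda>x. x powr (1/p)) ` M)) powr p = Min M"
proof -
  have m: "Min M \<in> M" using Min_in assms by blast
  have "Min ((\<lambda>x. x powr (1/p)) ` M) = Min M powr (1/p)"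
  proof (rule Min_eqI)
    show "finite ((\<lambda>x. x powr (1/p)) ` M)" using assms by simp
    show "Min M powr (1/p) \<in> (\<lambda>x. x powr (1/p)) ` M" using m by simp
    fix y assume "y \<in> (\<lambda>x. x powr (1/p)) ` M"
    then obtain x where x: "x \<in> M" "y = x powr (1/p)" by auto
    have "Min M \<le> x" using Min_le assms(1) x(1) by blast
    moreover have "0 \<le> Min M" using assms(3) m by blast
    ultimately show "Min M powr (1/p) \<le> y" using x assms(4) by (simp add: powr_mono2)
  qed
  then show ?thesis using powr_inv_cancel assms m by simp
qed

lemma ospa_CT:
  assumes p: "p \<ge> 1" and c: "c > 0" and dnn: "\<And>x y. x \<in> S \<Longrightarrow> y \<in> S \<Longrightarrow> 0 \<le> d x y"
    and Y: "bern_est S N Ys" and Z: "bern_est S N Zs"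
    and card: "card (\<Union>i<N. Zs i) \<le> card (\<Union>i<N. Ys i)"
  shows "ospa_ge p c d (\<Union>i<N. Ys i) (\<Union>i<N. Zs i) powr p = Min (CT p c d N Ys Zs)"
proof -
  define xs where "xs = enum_set (\<Union>i<N. Ys i)"
  define ys where "ys = enum_set (\<Union>i<N. Zs i)"
  note cY = canon[OF Y, folded xs_def]
  note cZ = canon[OF Z, folded ys_def]
  have lx: "length xs = card (\<Union>i<N. Ys i)" unfolding xs_def by (rule enum_set_props(3)[OF bern_est_finite[OF Y]])
  have ly: "length ys = card (\<Union>i<N. Zs i)" unfolding ys_def by (rule enum_set_props(3)[OF bern_est_finite[OF Z]])
  obtain \<tau>1 where t1: "\<tau>1 permutes {..<N}" "\<forall>i<N. Ys (\<tau>1 i) = (if i < length xs then {xs!i} else {})" using cY(5) by blast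
  obtain \<tau>2 where t2: "\<tau>2 permutes {..<N}" "\<forall>i<N. Zs (\<tau>2 i) = (if i < length ys then {ys!i} else {})" using cZ(5) by blast
  define M where "M = {(\<Sum>j<length ys. dcut c d (xs ! (\<rho> j)) (ys ! j) powr p) + c powr p * real (length xs - length ys) | \<rho>. \<rho> permutes {..<length xs}}"
  have M_eq: "Min M = Min (CT p c d N Ys Zs)"
  proof -
    have "Min M = Min (CT p c d N (\<lambda>i. if i < length xs then {xs!i} else {}) (\<lambda>i. if i < length ys then {ys!i} else {}))"
      unfolding M_def using p c dnn cY(1,3,4) cZ(3) lx ly card by (intro canon_main) auto
    also have "CT p c d N (\<lambda>i. if i < length xs then {xs!i} else {}) (\<lambda>i. if i < length ys then {ys!i} else {})
      = CT p c d N (\<lambda>i. Ys (\<tau>1 i)) (\<lambda>i. Zs (\<tau>2 i))"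
      using t1 t2 by (intro CT_cong) auto
    also have "\<dots> = CT p c d N Ys (\<lambda>i. Zs (\<tau>2 i))" by (rule CT_perm_left[OF t1(1)])
    also have "\<dots> = CT p c d N Ys Zs" by (rule CT_perm_right[OF t2(1)])
    finally show ?thesis .
  qed
  have Mnn: "0 \<le> Min M"
  proof -
    have fin: "finite M" unfolding M_def using finite_permutations[of "{..<length xs}"] by (simp add: Setcompr_eq_image)
    have ne: "M \<noteq> {}" unfolding M_def using permutes_id by blast
    have "0 \<le> x" if "x \<in> M" for x
    proof -
      obtain \<rho> where r: "\<rho> permutes {..<length xs}" and x: "x = (\<Sum>j<length ys. dcut c d (xs ! (\<rho> j)) (ys ! j) powr p) + c powr p * real (length xs - length ys)"
        using \<open>x \<in> M\<close> unfolding M_def by blast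
      then show ?thesis by (auto intro!: add_nonneg_nonneg sum_nonneg)
    qed
    then show ?thesis using Min_in[OF fin ne] by blast
  qed
  have "ospa_ge p c d (\<Union>i<N. Ys i) (\<Union>i<N. Zs i) = Min M powr (1/p)"
    unfolding ospa_ge_def M_def xs_def ys_def Let_def ..
  then show ?thesis using M_eq Mnn powr_inv_cancel[of "Min M" p] p by simp
qed

lemma ospa_tuple:
  assumes p: "p \<ge> 1" and c: "c > 0" and dnn: "\<And>x y. x \<in> S \<Longrightarrow> y \<in> S \<Longrightarrow> 0 \<le> d x y"
    and dsym: "\<And>x y. x \<in> S \<Longrightarrow> y \<in> S \<Longrightarrow> d x y = d y x"
    and Y: "bern_est S N Ys" and Z: "bern_est S N Zs"
  shows "dbar p c d (\<Union>i<N. Ys i) (\<Union>i<N. Zs i) powr p = dbar_tuple p c d N Ys Zs powr p"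
proof -
  have Yh: "\<And>i. i < N \<Longrightarrow> Ys i = {} \<or> (\<exists>x\<in>S. Ys i = {x})" and Zh: "\<And>i. i < N \<Longrightarrow> Zs i = {} \<or> (\<exists>x\<in>S. Zs i = {x})"
    using Y Z by (auto simp: bern_est_def)
  have CTnn: "0 \<le> x" if "x \<in> CT p c d N Ys Zs" for x
    using that unfolding CT_def by (auto intro!: sum_nonneg)
  have CTfin: "finite (CT p c d N Ys Zs)" unfolding CT_def
    using finite_permutations[of "{..<N}"] by (simp add: Setcompr_eq_image)
  have CTne: "CT p c d N Ys Zs \<noteq> {}" unfolding CT_def using permutes_id by blast
  have "dbar_tuple p c d N Ys Zs = Min ((\<lambda>x. x powr (1/p)) ` CT p c d N Ys Zs)"
    unfolding dbar_tuple_def CT_def by (rule arg_cong[where f=Min]) auto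
  then have T: "dbar_tuple p c d N Ys Zs powr p = Min (CT p c d N Ys Zs)"
    using Min_powr[OF CTfin CTne CTnn] p by simp
  show ?thesis
  proof (cases "card (\<Union>i<N. Zs i) \<le> card (\<Union>i<N. Ys i)")
    case True
    then show ?thesis unfolding dbar_def T using ospa_CT[OF p c dnn Y Z] by simp
  next
    case False
    then have "dbar p c d (\<Union>i<N. Ys i) (\<Union>i<N. Zs i) = ospa_ge p c d (\<Union>i<N. Zs i) (\<Union>i<N. Ys i)"
      by (simp add: dbar_def)
    then show ?thesis unfolding T using ospa_CT[OF p c dnn Z Y] False CT_sym[OF dsym Yh Zh] by simp
  qed
qed


lemma bern_single: "bern r q {x} = r * q x"
  by (simp add: bern_def)

lemma bern_Ebern_meas:
  assumes q: "q \<in> borel_measurable lborel"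
  shows "(\<lambda>y. bern r q (Ebern J y i)) \<in> borel_measurable (PiM J (\<lambda>_. lborel::'a::euclidean_space measure))"
proof (cases "i \<in> J")
  case True
  have "(\<lambda>y. y i) \<in> measurable (PiM J (\<lambda>_. lborel::'a measure)) lborel"
    using True by (rule measurable_component_singleton)
  from measurable_comp[OF this q] have "(\<lambda>y. q (y i)) \<in> borel_measurable (PiM J (\<lambda>_. lborel::'a measure))"
    by (simp add: comp_def)
  then have "(\<lambda>y. r * q (y i)) \<in> borel_measurable (PiM J (\<lambda>_. lborel::'a measure))" by measurable
  then show ?thesis using True by (simp add: Ebern_def bern_single)
next
  case False
  then show ?thesis by (simp add: Ebern_def)
qed

lemma dbarB_Ebern_meas:
  assumes dm: "\<And>z. (\<lambda>x. d x z) \<in> borel_measurable lborel"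
  shows "(\<lambda>y. dbarB c d (Ebern J y i) Z) \<in> borel_measurable (PiM J (\<lambda>_. lborel::'a::euclidean_space measure))"
proof (cases "i \<in> J")
  case True
  have "(\<lambda>y. y i) \<in> measurable (PiM J (\<lambda>_. lborel::'a measure)) lborel"
    using True by (rule measurable_component_singleton)
  from measurable_comp[OF this dm] have "(\<lambda>y. d (y i) (the_elem Z)) \<in> borel_measurable (PiM J (\<lambda>_. lborel::'a measure))"
    by (simp add: comp_def)
  then have "(\<lambda>y. if Z = {} then c else min c (d (y i) (the_elem Z))) \<in> borel_measurable (PiM J (\<lambda>_. lborel::'a measure))"
    by measurable
  moreover have "(\<lambda>y. dbarB c d (Ebern J y i) Z) = (\<lambda>y. if Z = {} then c else min c (d (y i) (the_elem Z)))"
    using True by (intro ext) (auto simp: Ebern_def dbarB_def dcut_def)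
  ultimately show ?thesis by simp
next
  case False
  then show ?thesis by (simp add: Ebern_def)
qed

lemma G_meas:
  assumes q: "\<And>h. q h \<in> borel_measurable lborel"
    and dm: "\<And>z. (\<lambda>x. d x z) \<in> borel_measurable lborel"
  shows "(\<lambda>y. ennreal ((\<Prod>i<N. bern (r (a ! i)) (q (a ! i)) (Ebern J y i)) * dbar_tuple p c d N (Ebern J y) Xh powr p))
     \<in> borel_measurable (PiM J (\<lambda>_. lborel::'a::euclidean_space measure))"
proof -
  have b[measurable]: "(\<lambda>y. bern (r (a ! i)) (q (a ! i)) (Ebern J y i)) \<in> borel_measurable (PiM J (\<lambda>_. lborel::'a measure))" for i
    by (rule bern_Ebern_meas[OF q])
  have db[measurable]: "(\<lambda>y. dbarB c d (Ebern J y i) Z) \<in> borel_measurable (PiM J (\<lambda>_. lborel::'a measure))" for i Z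
    by (rule dbarB_Ebern_meas[OF dm])
  have eq: "dbar_tuple p c d N (Ebern J y) Xh = Min ((\<lambda>\<pi>. (\<Sum>i<N. dbarB c d (Ebern J y i) (Xh (\<pi> i)) powr p) powr (1/p)) ` {\<pi>. \<pi> permutes {..<N}})" for y
    unfolding dbar_tuple_def by (rule arg_cong[where f=Min]) auto
  have fin: "finite {\<pi>. \<pi> permutes {..<N}}" by (rule finite_permutations) simp
  have "(\<lambda>y. Min ((\<lambda>\<pi>. (\<Sum>i<N. dbarB c d (Ebern J y i) (Xh (\<pi> i)) powr p) powr (1/p)) ` {\<pi>. \<pi> permutes {..<N}}))
     \<in> borel_measurable (PiM J (\<lambda>_. lborel::'a measure))"
    by (rule borel_measurable_Min[OF fin]) measurable
  then have [measurable]: "(\<lambda>y. dbar_tuple p c d N (Ebern J y) Xh) \<in> borel_measurable (PiM J (\<lambda>_. lborel::'a measure))"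
    by (simp add: eq)
  show ?thesis by measurable
qed


lemma bern_nonneg: "0 \<le> r \<Longrightarrow> r \<le> 1 \<Longrightarrow> (\<And>x. 0 \<le> q x) \<Longrightarrow> 0 \<le> bern r q X"
  by (simp add: bern_def)

lemma bern_zero_card: "finite X \<Longrightarrow> 2 \<le> card X \<Longrightarrow> bern r q X = 0"
  by (auto simp: bern_def)

lemma obj_eq:
  fixes S :: "'a::euclidean_space set" and d :: "'a \<Rightarrow> 'a \<Rightarrow> real"
    and p c :: real and N :: nat
    and A :: "'h list set" and w :: "'h list \<Rightarrow> real"
    and r :: "'h \<Rightarrow> real" and q :: "'h \<Rightarrow> 'a \<Rightarrow> real"
    and Yh :: "nat \<Rightarrow> 'a set"
  assumes d_nonneg: "\<And>x y. x \<in> S \<Longrightarrow> y \<in> S \<Longrightarrow> 0 \<le> d x y"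
    and d_sym: "\<And>x y. x \<in> S \<Longrightarrow> y \<in> S \<Longrightarrow> d x y = d y x"
    and d_meas: "\<And>y. (\<lambda>x. d x y) \<in> borel_measurable lborel"
    and p: "p \<ge> 1" and c: "c > 0"
    and r: "\<And>h. 0 \<le> r h \<and> r h \<le> 1"
    and q_meas: "\<And>h. q h \<in> borel_measurable lborel"
    and q_nonneg: "\<And>h x. 0 \<le> q h x"
    and q_supp: "\<And>h x. x \<notin> S \<Longrightarrow> q h x = 0"
    and w_nonneg: "\<And>a. a \<in> A \<Longrightarrow> 0 \<le> w a"
    and Yh: "bern_est S N Yh"
  shows "obj1 p c d N A w r q (\<Union>j<N. Yh j) = obj2 p c d N A w r q Yh"
proof -
  define G where "G a = (\<lambda>Xs. ennreal ((\<Prod>i<N. bern (r (a ! i)) (q (a ! i)) (Xs i)) * dbar_tuple p c d N Xs Yh powr p))" for a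
  define H where "H Xs = (\<Sum>a\<in>A. ennreal (w a) * G a Xs)" for Xs
  define I where "I J = (\<integral>\<^sup>+y. H (Ebern J y) \<partial>PiM J (\<lambda>_. lborel::'a measure))" for J
  have bnn: "0 \<le> bern (r h) (q h) X" for h X using r[of h] q_nonneg[of h] by (intro bern_nonneg) auto
  have Gz: "G a Xs = 0" if "i < N" "finite (Xs i)" "2 \<le> card (Xs i)" for a Xs i
  proof -
    have "bern (r (a ! i)) (q (a ! i)) (Xs i) = 0" using that by (intro bern_zero_card)
    then have pz: "(\<Prod>i<N. bern (r (a ! i)) (q (a ! i)) (Xs i)) = 0" using that by (intro prod_zero) auto
    show ?thesis unfolding G_def pz by simp
  qed
  have Gloc: "G a Xs = G a Ys" if "\<And>i. i < N \<Longrightarrow> Xs i = Ys i" for a Xs Ys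
  proof -
    have "(\<Prod>i<N. bern (r (a ! i)) (q (a ! i)) (Xs i)) = (\<Prod>i<N. bern (r (a ! i)) (q (a ! i)) (Ys i))"
      using that by (intro prod.cong) auto
    moreover have "dbar_tuple p c d N Xs Yh = dbar_tuple p c d N Ys Yh"
    proof -
      have "(\<Sum>i<N. dbarB c d (Xs i) (Yh (\<pi> i)) powr p) = (\<Sum>i<N. dbarB c d (Ys i) (Yh (\<pi> i)) powr p)" for \<pi>
        using that by (intro sum.cong) auto
      then show ?thesis unfolding dbar_tuple_def by simp
    qed
    ultimately show ?thesis by (simp add: G_def)
  qed
  have Gm: "(\<lambda>y. G a (Ebern J y)) \<in> borel_measurable (PiM J (\<lambda>_. lborel))" for a J
    unfolding G_def by (rule G_meas[OF q_meas d_meas])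
  have Hm: "(\<lambda>y. H (Ebern J y)) \<in> borel_measurable (PiM J (\<lambda>_. lborel))" for J
    unfolding H_def using Gm by measurable
  have Hz: "H Xs = 0" if "i < N" "finite (Xs i)" "2 \<le> card (Xs i)" for Xs i
    unfolding H_def using Gz[of i Xs, OF that] by simp
  have Hloc: "H Xs = H Ys" if "\<And>i. i < N \<Longrightarrow> Xs i = Ys i" for Xs Ys
    unfolding H_def using Gloc[OF that] by simp
  have "obj2 p c d N A w r q Yh = (\<Sum>a\<in>A. ennreal (w a) * msi N (G a))"
    unfolding obj2_def G_def ..
  also have "\<dots> = (\<Sum>a\<in>A. ennreal (w a) * (\<Sum>J\<in>Pow {..<N}. \<integral>\<^sup>+y. G a (Ebern J y) \<partial>PiM J (\<lambda>_. lborel)))"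
  proof (rule sum.cong[OF refl])
    fix a
    have "msi N (G a) = (\<Sum>J\<in>Pow {..<N}. \<integral>\<^sup>+y. G a (Ebern J y) \<partial>PiM J (\<lambda>_. lborel))"
      by (rule msi_formula) (auto intro: Gz Gm)
    then show "ennreal (w a) * msi N (G a) = ennreal (w a) * (\<Sum>J\<in>Pow {..<N}. \<integral>\<^sup>+y. G a (Ebern J y) \<partial>PiM J (\<lambda>_. lborel))"
      by simp
  qed
  also have "\<dots> = (\<Sum>J\<in>Pow {..<N}. \<Sum>a\<in>A. ennreal (w a) * \<integral>\<^sup>+y. G a (Ebern J y) \<partial>PiM J (\<lambda>_. lborel))"
    by (simp add: sum_distrib_left sum.swap[of _ A])
  also have "\<dots> = (\<Sum>J\<in>Pow {..<N}. I J)"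
  proof (rule sum.cong[OF refl])
    fix J
    have "I J = (\<Sum>a\<in>A. \<integral>\<^sup>+y. ennreal (w a) * G a (Ebern J y) \<partial>PiM J (\<lambda>_. lborel))"
      unfolding I_def H_def by (rule nn_integral_sum) (use Gm in auto)
    also have "\<dots> = (\<Sum>a\<in>A. ennreal (w a) * \<integral>\<^sup>+y. G a (Ebern J y) \<partial>PiM J (\<lambda>_. lborel))"
      by (intro sum.cong refl nn_integral_cmult Gm)
    finally show "(\<Sum>a\<in>A. ennreal (w a) * \<integral>\<^sup>+y. G a (Ebern J y) \<partial>PiM J (\<lambda>_. lborel)) = I J" by simp
  qed
  finally have O2: "obj2 p c d N A w r q Yh = (\<Sum>J\<in>Pow {..<N}. I J)" .
  define F where "F X = ennreal (dbar p c d X (\<Union>j<N. Yh j) powr p * mbm N A w r q X)" for X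
  have key: "(\<Prod>i<N. bern (r (a ! i)) (q (a ! i)) (Xs i)) * dbar p c d X (\<Union>j<N. Yh j) powr p
      = (\<Prod>i<N. bern (r (a ! i)) (q (a ! i)) (Xs i)) * dbar_tuple p c d N Xs Yh powr p"
    if Xs: "Xs \<in> oparts N X" for a Xs X
  proof (cases "(\<Prod>i<N. bern (r (a ! i)) (q (a ! i)) (Xs i)) = 0")
    case True then show ?thesis by simp
  next
    case False
    then have nz: "bern (r (a ! i)) (q (a ! i)) (Xs i) \<noteq> 0" if "i < N" for i
      using that by auto
    have be: "bern_est S N Xs"
      unfolding bern_est_def
    proof (intro conjI allI impI)
      fix i assume i: "i < N"
      show "Xs i = {} \<or> (\<exists>x\<in>S. Xs i = {x})"
      proof (cases "Xs i = {}")
        case False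
        with nz[OF i] have "card (Xs i) = 1" by (auto simp: bern_def split: if_splits)
        then obtain x where x: "Xs i = {x}" by (auto simp: card_Suc_eq)
        then have "q (a ! i) x \<noteq> 0" using nz[OF i] by (simp add: bern_single)
        then have "x \<in> S" using q_supp by blast
        then show ?thesis using x by blast
      qed simp
    next
      show "disjoint_family_on Xs {..<N}" using Xs by (simp add: oparts_def)
    qed
    have U: "(\<Union>i<N. Xs i) = X" using Xs by (simp add: oparts_def)
    show ?thesis using ospa_tuple[OF p c d_nonneg d_sym be Yh] U by simp
  qed
  have Fx: "F X = (\<Sum>Xs\<in>oparts N X. H Xs)" for X
  proof -
    have "dbar p c d X (\<Union>j<N. Yh j) powr p * mbm N A w r q X
      = (\<Sum>a\<in>A. \<Sum>Xs\<in>oparts N X. w a * ((\<Prod>i<N. bern (r (a ! i)) (q (a ! i)) (Xs i)) * dbar p c d X (\<Union>j<N. Yh j) powr p))"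
      unfolding mbm_def by (simp add: sum_distrib_left sum_distrib_right algebra_simps)
    also have "\<dots> = (\<Sum>a\<in>A. \<Sum>Xs\<in>oparts N X. w a * ((\<Prod>i<N. bern (r (a ! i)) (q (a ! i)) (Xs i)) * dbar_tuple p c d N Xs Yh powr p))"
      by (intro sum.cong refl) (simp add: key)
    finally have "F X = ennreal (\<Sum>a\<in>A. \<Sum>Xs\<in>oparts N X. w a * ((\<Prod>i<N. bern (r (a ! i)) (q (a ! i)) (Xs i)) * dbar_tuple p c d N Xs Yh powr p))"
      by (simp add: F_def)
    also have "\<dots> = (\<Sum>a\<in>A. \<Sum>Xs\<in>oparts N X. ennreal (w a * ((\<Prod>i<N. bern (r (a ! i)) (q (a ! i)) (Xs i)) * dbar_tuple p c d N Xs Yh powr p)))"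
      using w_nonneg bnn by (simp add: sum_nonneg prod_nonneg)
    also have "\<dots> = (\<Sum>a\<in>A. \<Sum>Xs\<in>oparts N X. ennreal (w a) * G a Xs)"
      unfolding G_def using w_nonneg bnn by (intro sum.cong refl) (simp add: ennreal_mult prod_nonneg)
    also have "\<dots> = (\<Sum>Xs\<in>oparts N X. H Xs)"
      unfolding H_def by (rule sum.swap)
    finally show ?thesis .
  qed
  have "obj1 p c d N A w r q (\<Union>j<N. Yh j) = set_int F"
    unfolding obj1_def F_def ..
  also have "\<dots> = (\<Sum>J\<in>Pow {..<N}. I J)"
    unfolding I_def by (rule set_int_oparts[OF Fx]) (auto intro: Hz Hloc Hm)
  finally show ?thesis using O2 by simp
qed


theorem lemma1:
  fixes S :: "'a::euclidean_space set" and d :: "'a \<Rightarrow> 'a \<Rightarrow> real"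
    and p c :: real and N :: nat
    and A :: "'h list set" and w :: "'h list \<Rightarrow> real"
    and r :: "'h \<Rightarrow> real" and q :: "'h \<Rightarrow> 'a \<Rightarrow> real"
    and Xh :: "nat \<Rightarrow> 'a set"
  assumes S_meas: "S \<in> sets lborel"
    and d_nonneg: "\<And>x y. x \<in> S \<Longrightarrow> y \<in> S \<Longrightarrow> 0 \<le> d x y"
    and d_zero: "\<And>x y. x \<in> S \<Longrightarrow> y \<in> S \<Longrightarrow> d x y = 0 \<longleftrightarrow> x = y"
    and d_sym: "\<And>x y. x \<in> S \<Longrightarrow> y \<in> S \<Longrightarrow> d x y = d y x"
    and d_tri: "\<And>x y z. x \<in> S \<Longrightarrow> y \<in> S \<Longrightarrow> z \<in> S \<Longrightarrow> d x z \<le> d x y + d y z"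
    and d_meas: "\<And>y. (\<lambda>x. d x y) \<in> borel_measurable lborel"
    and p: "p \<ge> 1" and c: "c > 0"
    and r: "\<And>h. 0 \<le> r h \<and> r h \<le> 1"
    and q_meas: "\<And>h. q h \<in> borel_measurable lborel"
    and q_nonneg: "\<And>h x. 0 \<le> q h x"
    and q_supp: "\<And>h x. x \<notin> S \<Longrightarrow> q h x = 0"
    and q_int: "\<And>h. (\<integral>\<^sup>+ x. ennreal (q h x) \<partial>lborel) = 1"
    and A_fin: "finite A"
    and A_len: "\<And>a. a \<in> A \<Longrightarrow> length a = N"
    and w_nonneg: "\<And>a. a \<in> A \<Longrightarrow> 0 \<le> w a"
    and w_sum: "(\<Sum>a\<in>A. w a) = 1"
    and Xh: "bern_est S N Xh"
  shows "(\<forall>Yh. bern_est S N Yh \<longrightarrow> obj2 p c d N A w r q Xh \<le> obj2 p c d N A w r q Yh)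
     \<longleftrightarrow> (\<forall>Y. finite Y \<and> Y \<subseteq> S \<and> card Y \<le> N \<longrightarrow>
            obj1 p c d N A w r q (\<Union>j<N. Xh j) \<le> obj1 p c d N A w r q Y)"
proof -
  have eq: "obj1 p c d N A w r q (\<Union>j<N. Yh j) = obj2 p c d N A w r q Yh" if "bern_est S N Yh" for Yh
    by (rule obj_eq[OF d_nonneg d_sym d_meas p c r q_meas q_nonneg q_supp w_nonneg that]) auto
  show ?thesis
  proof
    assume H: "\<forall>Yh. bern_est S N Yh \<longrightarrow> obj2 p c d N A w r q Xh \<le> obj2 p c d N A w r q Yh"
    show "\<forall>Y. finite Y \<and> Y \<subseteq> S \<and> card Y \<le> N \<longrightarrow>
            obj1 p c d N A w r q (\<Union>j<N. Xh j) \<le> obj1 p c d N A w r q Y"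
    proof (intro allI impI)
      fix Y assume Y: "finite Y \<and> Y \<subseteq> S \<and> card Y \<le> N"
      define ys where "ys = enum_set Y"
      have ys: "set ys = Y" "distinct ys" "length ys = card Y" unfolding ys_def using enum_set_props Y by auto
      define Yh where "Yh = (\<lambda>i. if i < length ys then {ys ! i} else {})"
      have be: "bern_est S N Yh"
        unfolding bern_est_def
      proof (intro conjI allI impI)
        fix i assume "i < N"
        show "Yh i = {} \<or> (\<exists>x\<in>S. Yh i = {x})"
          using Y ys(1) by (auto simp: Yh_def)
      next
        show "disjoint_family_on Yh {..<N}"
          unfolding disjoint_family_on_def Yh_def using ys(2) by (auto simp: nth_eq_iff_index_eq)
      qed
      have U: "(\<Union>j<N. Yh j) = Y"
      proof
        show "(\<Union>j<N. Yh j) \<subseteq> Y" using ys(1) by (auto simp: Yh_def split: if_splits)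
        show "Y \<subseteq> (\<Union>j<N. Yh j)"
        proof
          fix y assume "y \<in> Y"
          then obtain k where k: "k < length ys" "ys ! k = y" using ys(1) by (auto simp: in_set_conv_nth)
          then have "k < N" using ys(3) Y by linarith
          then show "y \<in> (\<Union>j<N. Yh j)" using k by (auto simp: Yh_def)
        qed
      qed
      have "obj1 p c d N A w r q (\<Union>j<N. Xh j) = obj2 p c d N A w r q Xh" by (rule eq[OF Xh])
      also have "\<dots> \<le> obj2 p c d N A w r q Yh" using H be by blast
      also have "\<dots> = obj1 p c d N A w r q Y" using eq[OF be] U by simp
      finally show "obj1 p c d N A w r q (\<Union>j<N. Xh j) \<le> obj1 p c d N A w r q Y" .
    qed
  next
    assume H: "\<forall>Y. finite Y \<and> Y \<subseteq> S \<and> card Y \<le> N \<longrightarrow>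
            obj1 p c d N A w r q (\<Union>j<N. Xh j) \<le> obj1 p c d N A w r q Y"
    show "\<forall>Yh. bern_est S N Yh \<longrightarrow> obj2 p c d N A w r q Xh \<le> obj2 p c d N A w r q Yh"
    proof (intro allI impI)
      fix Yh assume be: "bern_est S N Yh"
      have fin: "finite (\<Union>j<N. Yh j)" by (rule bern_est_finite[OF be])
      have sub: "(\<Union>j<N. Yh j) \<subseteq> S" using be by (fastforce simp: bern_est_def)
      have c1: "card (Yh j) \<le> 1" if "j < N" for j
        using be that by (auto simp: bern_est_def)
      have "card (\<Union>j<N. Yh j) \<le> (\<Sum>j<N. card (Yh j))" by (rule card_UN_le) simp
      also have "\<dots> \<le> (\<Sum>j<N. 1)" by (rule sum_mono) (use c1 in auto)
      finally have cN: "card (\<Union>j<N. Yh j) \<le> N" by simp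
      have "obj2 p c d N A w r q Xh = obj1 p c d N A w r q (\<Union>j<N. Xh j)" by (rule eq[OF Xh, symmetric])
      also have "\<dots> \<le> obj1 p c d N A w r q (\<Union>j<N. Yh j)" using H fin sub cN by blast
      also have "\<dots> = obj2 p c d N A w r q Yh" by (rule eq[OF be])
      finally show "obj2 p c d N A w r q Xh \<le> obj2 p c d N A w r q Yh" .
    qed
  qed
qed

end
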